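(* Let $B,C^T\in\mathbb{R}^{n\times m}$ and assume $\operatorname{rank}B=r$. (a) There exists an invertible $T\in\mathbb{R}^{n\times n}$ with $(TB)^T=CT^{-1}$ if and only if $\operatorname{Ker}C^T=\operatorname{Ker}B$, $\operatorname{rank}(CB)=r$ and $CB$ is symmetric positive semidefinite; equivalently, if and only if there exists an invertible (which can be taken orthogonal) $V\in\mathbb{R}^{m\times m}$ such that $BV=[B_1\;\;0]$, $C^TV=[C_1^T\;\;0]$ with $B_1,C_1^T\in\mathbb{R}^{n\times r}$ of full column rank and $C_1B_1=YY^T$ symmetric positive definite for some invertible $Y\in\mathbb{R}^{r\times r}$. (b) Let $N_B\in\mathbb{R}^{n\times(n-r)}$ have columns forming a basis of $\operatorname{Ker}B^T$. If the conditions in (a) hold, with $V,B_1,C_1,Y$ as there, then every invertible $T$ with $(TB)^T=CT^{-1}$ has the form $T=U T_Z T_0$, where $$T_0=\begin{bmatrix}N_B^T\\ Y^{-1}C_1\end{bmatrix},\qquad T_Z=\begin{bmatrix}Z&0\\0&I\end{bmatrix},$$ with $U\in\mathbb{R}^{n\times n}$ an arbitrary real orthogonal matrix and $Z\in\mathbb{R}^{(n-r)\times(n-r)}$ an arbitrary nonsingular matrix. *)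

theory Defs
  imports "Jordan_Normal_Form.DL_Rank" "Jordan_Normal_Form.Matrix_Kernel"
begin

definition mrank :: "real mat \<Rightarrow> nat" where
  "mrank A = vec_space.rank (dim_row A) A"

definition append_cols :: "real mat \<Rightarrow> real mat \<Rightarrow> real mat" where
  "append_cols A B = four_block_mat A B (0\<^sub>m 0 (dim_col A)) (0\<^sub>m 0 (dim_col B))"

definition sym_psd :: "real mat \<Rightarrow> bool" where
  "sym_psd A \<longleftrightarrow> square_mat A \<and> transpose_mat A = A \<and>
     (\<forall>x \<in> carrier_vec (dim_col A). 0 \<le> x \<bullet> (A *\<^sub>v x))"

definition sym_pd :: "real mat \<Rightarrow> bool" where
  "sym_pd A \<longleftrightarrow> square_mat A \<and> transpose_mat A = A \<and>
     (\<forall>x \<in> carrier_vec (dim_col A). x \<noteq> 0\<^sub>v (dim_col A) \<longrightarrow> 0 < x \<bullet> (A *\<^sub>v x))"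

definition real_orth :: "real mat \<Rightarrow> bool" where
  "real_orth U \<longleftrightarrow> square_mat U \<and> transpose_mat U * U = 1\<^sub>m (dim_col U)"

definition cols_basis :: "real mat \<Rightarrow> real vec set \<Rightarrow> bool" where
  "cols_basis N K \<longleftrightarrow>
     (\<forall>x \<in> carrier_vec (dim_col N). N *\<^sub>v x = 0\<^sub>v (dim_row N) \<longrightarrow> x = 0\<^sub>v (dim_col N)) \<and>
     K = (\<lambda>x. N *\<^sub>v x) ` carrier_vec (dim_col N)"

definition inv_cond :: "real mat \<Rightarrow> real mat \<Rightarrow> real mat \<Rightarrow> bool" where
  "inv_cond T B C \<longleftrightarrow> (\<exists>Ti. inverts_mat T Ti \<and> inverts_mat Ti T \<and>
      transpose_mat (T * B) = C * Ti)"

definition split_cond ::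
  "nat \<Rightarrow> nat \<Rightarrow> nat \<Rightarrow> real mat \<Rightarrow> real mat \<Rightarrow> real mat \<Rightarrow> real mat \<Rightarrow> real mat \<Rightarrow> real mat \<Rightarrow> bool" where
  "split_cond n m r B C V B1 C1 Y \<longleftrightarrow>
     B1 \<in> carrier_mat n r \<and> C1 \<in> carrier_mat r n \<and> Y \<in> carrier_mat r r \<and>
     B * V = append_cols B1 (0\<^sub>m n (m - r)) \<and>
     transpose_mat C * V = append_cols (transpose_mat C1) (0\<^sub>m n (m - r)) \<and>
     mrank B1 = r \<and> mrank (transpose_mat C1) = r \<and>
     invertible_mat Y \<and> C1 * B1 = Y * transpose_mat Y \<and> sym_pd (C1 * B1)"

end

theory Submission
  imports Defs
begin

definition tk :: "real mat \<Rightarrow> bool" where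
  "tk A \<longleftrightarrow> (\<forall>x \<in> carrier_vec (dim_col A). A *\<^sub>v x = 0\<^sub>v (dim_row A) \<longrightarrow> x = 0\<^sub>v (dim_col A))"

lemma tkI: assumes "A \<in> carrier_mat p q" "\<And>x. x \<in> carrier_vec q \<Longrightarrow> A *\<^sub>v x = 0\<^sub>v p \<Longrightarrow> x = 0\<^sub>v q"
  shows "tk A" using assms unfolding tk_def by auto

lemma tkD: assumes "tk A" "A \<in> carrier_mat p q" "x \<in> carrier_vec q" "A *\<^sub>v x = 0\<^sub>v p" shows "x = 0\<^sub>v q"
  using assms unfolding tk_def by auto

lemma col_unit: assumes A: "(A :: real mat) \<in> carrier_mat p q" and i: "i < q"
  shows "A *\<^sub>v unit_vec q i = col A i"
  by (rule eq_vecI, insert A i, auto)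

lemma mat_eq_vecI: assumes A: "(A :: real mat) \<in> carrier_mat p q" and B: "B \<in> carrier_mat p q"
  and eq: "\<And>x. x \<in> carrier_vec q \<Longrightarrow> A *\<^sub>v x = B *\<^sub>v x" shows "A = B"
proof (rule eq_matI)
  fix i j assume i: "i < dim_row B" and j: "j < dim_col B"
  have "A $$ (i,j) = (A *\<^sub>v unit_vec q j) $ i" using col_unit[OF A, of j] A B i j by auto
  also have "\<dots> = (B *\<^sub>v unit_vec q j) $ i" using eq by auto
  also have "\<dots> = B $$ (i,j)" using col_unit[OF B, of j] A B i j by auto
  finally show "A $$ (i,j) = B $$ (i,j)" .
qed (insert A B, auto)

lemma tk_inv: assumes A: "A \<in> carrier_mat n n" and "tk A"
  obtains Ai where "Ai \<in> carrier_mat n n" "A * Ai = 1\<^sub>m n" "Ai * A = 1\<^sub>m n"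
proof -
  have "det A \<noteq> 0" using det_0_iff_vec_prod_zero_field[OF A] tkD[OF assms(2) A] by auto
  from det_non_zero_imp_unit[OF A this, unfolded Units_def, of "()"]
  obtain B where "B \<in> carrier_mat n n" "B * A = 1\<^sub>m n" "A * B = 1\<^sub>m n" by (auto simp: ring_mat_def)
  thus ?thesis using that by blast
qed

lemma left_inv_tk: assumes A: "A \<in> carrier_mat p q" and L: "L \<in> carrier_mat q p"
  and LA: "L * A = 1\<^sub>m q" shows "tk A"
proof (rule tkI[OF A])
  fix x assume x: "x \<in> carrier_vec q" and Ax: "A *\<^sub>v x = 0\<^sub>v p"
  have "x = (L * A) *\<^sub>v x" using LA x by auto
  also have "\<dots> = L *\<^sub>v (A *\<^sub>v x)" using L A x by auto
  also have "\<dots> = 0\<^sub>v q" using Ax L by auto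
  finally show "x = 0\<^sub>v q" .
qed

lemma tk_mult: assumes A: "A \<in> carrier_mat p q" and B: "B \<in> carrier_mat q k"
  and "tk A" "tk B" shows "tk (A * B)"
proof (rule tkI)
  show "A * B \<in> carrier_mat p k" using A B by auto
  fix x assume x: "x \<in> carrier_vec k" and ABx: "(A * B) *\<^sub>v x = 0\<^sub>v p"
  have "A *\<^sub>v (B *\<^sub>v x) = 0\<^sub>v p" using ABx A B x by auto
  hence "B *\<^sub>v x = 0\<^sub>v q" using tkD[OF assms(3) A] B x by auto
  thus "x = 0\<^sub>v k" using tkD[OF assms(4) B x] by auto
qed

lemma tk_rows: assumes A: "A \<in> carrier_mat p q" and tk: "tk A" shows "q \<le> p"
proof (rule ccontr)
  assume "\<not> q \<le> p"
  hence pq: "p < q" by auto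
  define A' where "A' = mat q q (\<lambda>(i,j). if i < p then A $$ (i,j) else 0)"
  have A': "A' \<in> carrier_mat q q" unfolding A'_def by auto
  have rowA': "row A' i = row A i" if "i < p" for i
    by (rule eq_vecI, insert that pq A, auto simp: A'_def)
  have "tk A'"
  proof (rule tkI[OF A'])
    fix x assume x: "x \<in> carrier_vec q" and A'x: "A' *\<^sub>v x = 0\<^sub>v q"
    have "A *\<^sub>v x = 0\<^sub>v p"
    proof (rule eq_vecI)
      fix i assume "i < dim_vec (0\<^sub>v p :: real vec)"
      hence i: "i < p" by auto
      have "(A *\<^sub>v x) $ i = (A' *\<^sub>v x) $ i" using rowA'[OF i] i pq A A' by auto
      thus "(A *\<^sub>v x) $ i = 0\<^sub>v p $ i" using A'x i pq by auto
    qed (insert A, auto)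
    thus "x = 0\<^sub>v q" using tkD[OF tk A x] by auto
  qed
  then obtain Ai where Ai: "Ai \<in> carrier_mat q q" "A' * Ai = 1\<^sub>m q" using tk_inv[OF A'] by metis
  have rz: "row A' (q - 1) = 0\<^sub>v q"
    by (rule eq_vecI, insert pq, auto simp: A'_def)
  have e1: "(A' * Ai) $$ (q - 1, q - 1) = row A' (q - 1) \<bullet> col Ai (q - 1)"
    using A' Ai(1) pq by (intro index_mult_mat(1)) auto
  have "row A' (q - 1) \<bullet> col Ai (q - 1) = 0" unfolding rz using Ai by auto
  then show False using e1 Ai(2) pq by simp
qed

lemma mrank_range: assumes A: "A \<in> carrier_mat p q" and A': "A' \<in> carrier_mat p q'"
  and eq: "(\<lambda>x. A *\<^sub>v x) ` carrier_vec q = (\<lambda>x. A' *\<^sub>v x) ` carrier_vec q'"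
  shows "mrank A = mrank A'"
proof -
  have "vec_space.col_space p A = vec_space.col_space p A'"
  proof -
    have 1: "\<exists>y\<in>carrier_vec q'. A' *\<^sub>v y = A *\<^sub>v x" if x: "x \<in> carrier_vec q" for x
    proof -
      have "A *\<^sub>v x \<in> (\<lambda>x. A' *\<^sub>v x) ` carrier_vec q'" using eq x by blast
      then show ?thesis by auto
    qed
    have 2: "\<exists>y\<in>carrier_vec q. A *\<^sub>v y = A' *\<^sub>v x" if x: "x \<in> carrier_vec q'" for x
    proof -
      have "A' *\<^sub>v x \<in> (\<lambda>x. A *\<^sub>v x) ` carrier_vec q" using eq x by blast
      then show ?thesis by auto
    qed
    have "{y \<in> carrier_vec (dim_row A). \<exists>x\<in>carrier_vec (dim_col A). A *\<^sub>v x = y}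
      = {y \<in> carrier_vec (dim_row A'). \<exists>x\<in>carrier_vec (dim_col A'). A' *\<^sub>v x = y}"
    proof (rule Set.set_eqI, rule iffI)
      fix y assume "y \<in> {y \<in> carrier_vec (dim_row A). \<exists>x\<in>carrier_vec (dim_col A). A *\<^sub>v x = y}"
      then obtain x where x: "x \<in> carrier_vec q" and y: "y = A *\<^sub>v x" using A by auto
      from 1[OF x] obtain z where "z \<in> carrier_vec q'" "A' *\<^sub>v z = y" using y by auto
      thus "y \<in> {y \<in> carrier_vec (dim_row A'). \<exists>x\<in>carrier_vec (dim_col A'). A' *\<^sub>v x = y}"
        using A A' by auto
    next
      fix y assume "y \<in> {y \<in> carrier_vec (dim_row A'). \<exists>x\<in>carrier_vec (dim_col A'). A' *\<^sub>v x = y}"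
      then obtain x where x: "x \<in> carrier_vec q'" and y: "y = A' *\<^sub>v x" using A' by auto
      from 2[OF x] obtain z where "z \<in> carrier_vec q" "A *\<^sub>v z = y" using y by auto
      thus "y \<in> {y \<in> carrier_vec (dim_row A). \<exists>x\<in>carrier_vec (dim_col A). A *\<^sub>v x = y}"
        using A A' by auto
    qed
    thus ?thesis using vec_space.col_space_eq[OF A] vec_space.col_space_eq[OF A'] by simp
  qed
  then show ?thesis unfolding mrank_def using A A' 
    by (simp add: vec_space.rank_def vec_space.col_space_def)
qed

lemma mrank_tk: assumes A: "A \<in> carrier_mat p q" and tk: "tk A" shows "mrank A = q"
proof -
  have dist: "distinct (cols A)"
  proof (rule ccontr)
    assume "\<not> distinct (cols A)"
    then obtain i j where ij: "i < q" "j < q" "i \<noteq> j" "cols A ! i = cols A ! j"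
      using A by (auto simp: distinct_conv_nth)
    hence cij: "col A i = col A j" using A by auto
    define v where "v = (unit_vec q i - unit_vec q j :: real vec)"
    have v: "v \<in> carrier_vec q" unfolding v_def by auto
    have "v $ i = 1" using ij unfolding v_def by auto
    hence "v \<noteq> 0\<^sub>v q" using ij by auto
    moreover have "A *\<^sub>v v = 0\<^sub>v p"
      unfolding v_def using mult_minus_distrib_mat_vec[OF A, of "unit_vec q i" "unit_vec q j"]
        col_unit[OF A ij(1)] col_unit[OF A ij(2)] cij A by auto
    ultimately show False using tkD[OF tk A v] by auto
  qed
  have li: "\<not> module.lin_dep class_ring (module_vec TYPE(real) p) (set (cols A))"
  proof
    assume "module.lin_dep class_ring (module_vec TYPE(real) p) (set (cols A))"
    from vec_space.lin_depE[OF A this dist] obtain v where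
      "v \<in> carrier_vec q" "v \<noteq> 0\<^sub>v q" "A *\<^sub>v v = 0\<^sub>v p" by blast
    thus False using tkD[OF tk A] by auto
  qed
  show ?thesis unfolding mrank_def using vec_space.lin_indpt_full_rank[OF A dist li] A by auto
qed

lemma AC_dims[simp]: "dim_row (append_cols A B) = dim_row A" "dim_col (append_cols A B) = dim_col A + dim_col B"
  unfolding append_cols_def by auto

lemma AR_dims[simp]: "dim_row (A @\<^sub>r B) = dim_row A + dim_row B" "dim_col (A @\<^sub>r B) = dim_col A"
  unfolding append_rows_def by simp_all

lemma AC_carrier[simp,intro]: "A \<in> carrier_mat p k1 \<Longrightarrow> B \<in> carrier_mat p k2 \<Longrightarrow>
  append_cols A B \<in> carrier_mat p (k1 + k2)"
  by (intro carrier_matI, auto)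

lemma AC_index_gen[simp]: "i < dim_row A \<Longrightarrow> j < dim_col A + dim_col B \<Longrightarrow>
  append_cols A B $$ (i,j) = (if j < dim_col A then A $$ (i,j) else B $$ (i, j - dim_col A))"
  unfolding append_cols_def by simp

lemma AR_index_gen[simp]: "i < dim_row A + dim_row B \<Longrightarrow> j < dim_col A \<Longrightarrow>
  (A @\<^sub>r B) $$ (i,j) = (if i < dim_row A then A $$ (i,j) else B $$ (i - dim_row A, j))"
  unfolding append_rows_def by simp

lemma AC_index: assumes "A \<in> carrier_mat p k1" "B \<in> carrier_mat p k2" "i < p" "j < k1 + k2"
  shows "append_cols A B $$ (i,j) = (if j < k1 then A $$ (i,j) else B $$ (i, j - k1))"
proof -
  from assms have "dim_row A = p" "dim_col A = k1" "dim_col B = k2" by auto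
  then show ?thesis using assms by simp
qed

lemma AR_index: assumes "A \<in> carrier_mat p1 q" "B \<in> carrier_mat p2 q" "i < p1 + p2" "j < q"
  shows "(A @\<^sub>r B) $$ (i,j) = (if i < p1 then A $$ (i,j) else B $$ (i - p1, j))"
proof -
  from assms have "dim_row A = p1" "dim_col A = q" "dim_row B = p2" by auto
  then show ?thesis using assms by simp
qed

lemma row_AC: assumes A: "(A :: real mat) \<in> carrier_mat p k1" and B: "B \<in> carrier_mat p k2" and i: "i < p"
  shows "row (append_cols A B) i = row A i @\<^sub>v row B i"
  by (rule eq_vecI, insert assms, auto simp: AC_index[OF A B])

lemma col_AC1: assumes A: "(A :: real mat) \<in> carrier_mat p k1" and B: "B \<in> carrier_mat p k2" and j: "j < k1"
  shows "col (append_cols A B) j = col A j"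
  by (rule eq_vecI, insert assms, auto simp: AC_index[OF A B])

lemma col_AC2: assumes A: "(A :: real mat) \<in> carrier_mat p k1" and B: "B \<in> carrier_mat p k2" 
  and j: "k1 \<le> j" "j < k1 + k2"
  shows "col (append_cols A B) j = col B (j - k1)"
  by (rule eq_vecI, insert assms, auto simp: AC_index[OF A B])

lemma col_AR: assumes A: "(A :: real mat) \<in> carrier_mat p1 q" and B: "B \<in> carrier_mat p2 q" and j: "j < q"
  shows "col (A @\<^sub>r B) j = col A j @\<^sub>v col B j"
  by (rule eq_vecI, insert assms, auto simp: AR_index[OF A B])

lemma row_AR1: assumes A: "(A :: real mat) \<in> carrier_mat p1 q" and B: "B \<in> carrier_mat p2 q" and i: "i < p1"
  shows "row (A @\<^sub>r B) i = row A i"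
  by (rule eq_vecI, insert assms, auto simp: AR_index[OF A B])

lemma row_AR2: assumes A: "(A :: real mat) \<in> carrier_mat p1 q" and B: "B \<in> carrier_mat p2 q" 
  and i: "p1 \<le> i" "i < p1 + p2"
  shows "row (A @\<^sub>r B) i = row B (i - p1)"
  by (rule eq_vecI, insert assms, auto simp: AR_index[OF A B])

lemma mult_AC: assumes M: "(M :: real mat) \<in> carrier_mat s p" and A: "A \<in> carrier_mat p k1" and B: "B \<in> carrier_mat p k2"
  shows "M * append_cols A B = append_cols (M * A) (M * B)"
proof (rule eq_matI)
  have MA: "M * A \<in> carrier_mat s k1" and MB: "M * B \<in> carrier_mat s k2" using M A B by auto
  fix i j assume i: "i < dim_row (append_cols (M * A) (M * B))" and j: "j < dim_col (append_cols (M * A) (M * B))"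
  hence i: "i < s" and j: "j < k1 + k2" using AC_carrier[OF MA MB] by auto
  show "(M * append_cols A B) $$ (i, j) = append_cols (M * A) (M * B) $$ (i, j)"
  proof (cases "j < k1")
    case True
    thus ?thesis using i j M A B AC_carrier[OF A B] by (simp add: AC_index[OF MA MB] col_AC1[OF A B])
  next
    case False
    thus ?thesis using i j M A B AC_carrier[OF A B] by (simp add: AC_index[OF MA MB] col_AC2[OF A B])
  qed
qed (insert M A B, auto)

lemma AR_mult: assumes M: "(M :: real mat) \<in> carrier_mat q s" and A: "A \<in> carrier_mat p1 q" and B: "B \<in> carrier_mat p2 q"
  shows "(A @\<^sub>r B) * M = (A * M) @\<^sub>r (B * M)"
proof (rule eq_matI)
  have AM: "A * M \<in> carrier_mat p1 s" and BM: "B * M \<in> carrier_mat p2 s" using M A B by auto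
  fix i j assume i: "i < dim_row ((A * M) @\<^sub>r (B * M))" and j: "j < dim_col ((A * M) @\<^sub>r (B * M))"
  hence i: "i < p1 + p2" and j: "j < s" using AM BM A B M by auto
  show "((A @\<^sub>r B) * M) $$ (i, j) = ((A * M) @\<^sub>r (B * M)) $$ (i, j)"
  proof (cases "i < p1")
    case True
    thus ?thesis using i j M A B by (simp add: AR_index[OF AM BM] row_AR1[OF A B])
  next
    case False
    thus ?thesis using i j M A B by (simp add: AR_index[OF AM BM] row_AR2[OF A B])
  qed
qed (insert M A B, auto)

lemma AC_mult_AR: assumes A: "(A :: real mat) \<in> carrier_mat p k1" and B: "B \<in> carrier_mat p k2"
  and C: "C \<in> carrier_mat k1 q" and D: "D \<in> carrier_mat k2 q"
  shows "append_cols A B * (C @\<^sub>r D) = A * C + B * D"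
proof (rule eq_matI)
  fix i j assume i: "i < dim_row (A * C + B * D)" and j: "j < dim_col (A * C + B * D)"
  hence i: "i < p" and j: "j < q" using A B C D by auto
  have "(append_cols A B * (C @\<^sub>r D)) $$ (i,j) = (row A i @\<^sub>v row B i) \<bullet> (col C j @\<^sub>v col D j)"
    using i j A B C D by (simp add: row_AC[OF A B i] col_AR[OF C D j])
  also have "\<dots> = row A i \<bullet> col C j + row B i \<bullet> col D j"
    using scalar_prod_append[of "row A i" k1 "row B i" k2 "col C j" "col D j"] A B C D i j by auto
  finally show "(append_cols A B * (C @\<^sub>r D)) $$ (i,j) = (A * C + B * D) $$ (i,j)"
    using i j A B C D by simp
qed (insert A B C D, auto)

lemma AR_mult_AC: assumes A: "(A :: real mat) \<in> carrier_mat p1 q" and B: "B \<in> carrier_mat p2 q"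
  and C: "C \<in> carrier_mat q k1" and D: "D \<in> carrier_mat q k2"
  shows "(A @\<^sub>r B) * append_cols C D = four_block_mat (A * C) (A * D) (B * C) (B * D)"
proof (rule eq_matI)
  fix i j assume i: "i < dim_row (four_block_mat (A * C) (A * D) (B * C) (B * D))" 
    and j: "j < dim_col (four_block_mat (A * C) (A * D) (B * C) (B * D))"
  hence i: "i < p1 + p2" and j: "j < k1 + k2" using A B C D by auto
  have e: "((A @\<^sub>r B) * append_cols C D) $$ (i,j) = row (A @\<^sub>r B) i \<bullet> col (append_cols C D) j"
    using i j A B C D by (intro index_mult_mat(1)) auto
  have f: "four_block_mat (A * C) (A * D) (B * C) (B * D) $$ (i,j) = 
    (if i < p1 then if j < k1 then (A * C) $$ (i,j) else (A * D) $$ (i,j - k1)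
      else if j < k1 then (B * C) $$ (i - p1, j) else (B * D) $$ (i - p1, j - k1))"
    using i j A B C D by (subst index_mat_four_block(1)) auto
  show "((A @\<^sub>r B) * append_cols C D) $$ (i,j) = four_block_mat (A * C) (A * D) (B * C) (B * D) $$ (i,j)"
    unfolding e f
  proof (cases "i < p1"; cases "j < k1")
    assume "i < p1" "j < k1" thus "row (A @\<^sub>r B) i \<bullet> col (append_cols C D) j = (if i < p1 then if j < k1 then (A * C) $$ (i,j) else (A * D) $$ (i,j - k1)
      else if j < k1 then (B * C) $$ (i - p1, j) else (B * D) $$ (i - p1, j - k1))"
      using A B C D by (simp add: row_AR1[OF A B] col_AC1[OF C D])
  next
    assume "i < p1" "\<not> j < k1" thus "row (A @\<^sub>r B) i \<bullet> col (append_cols C D) j = (if i < p1 then if j < k1 then (A * C) $$ (i,j) else (A * D) $$ (i,j - k1)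
      else if j < k1 then (B * C) $$ (i - p1, j) else (B * D) $$ (i - p1, j - k1))"
      using A B C D j by (simp add: row_AR1[OF A B] col_AC2[OF C D])
  next
    assume "\<not> i < p1" "j < k1" thus "row (A @\<^sub>r B) i \<bullet> col (append_cols C D) j = (if i < p1 then if j < k1 then (A * C) $$ (i,j) else (A * D) $$ (i,j - k1)
      else if j < k1 then (B * C) $$ (i - p1, j) else (B * D) $$ (i - p1, j - k1))"
      using A B C D i by (simp add: row_AR2[OF A B] col_AC1[OF C D])
  next
    assume "\<not> i < p1" "\<not> j < k1" thus "row (A @\<^sub>r B) i \<bullet> col (append_cols C D) j = (if i < p1 then if j < k1 then (A * C) $$ (i,j) else (A * D) $$ (i,j - k1)
      else if j < k1 then (B * C) $$ (i - p1, j) else (B * D) $$ (i - p1, j - k1))"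
      using A B C D i j by (simp add: row_AR2[OF A B] col_AC2[OF C D])
  qed
qed (insert A B C D, auto)

lemma transpose_AC: assumes A: "(A :: real mat) \<in> carrier_mat p k1" and B: "B \<in> carrier_mat p k2"
  shows "transpose_mat (append_cols A B) = transpose_mat A @\<^sub>r transpose_mat B"
  by (rule eq_matI, insert A B, auto simp: AC_index[OF A B] AR_index)

lemma transpose_AR: assumes A: "(A :: real mat) \<in> carrier_mat p1 q" and B: "B \<in> carrier_mat p2 q"
  shows "transpose_mat (A @\<^sub>r B) = append_cols (transpose_mat A) (transpose_mat B)"
  by (rule eq_matI, insert A B, auto simp: AC_index AR_index[OF A B])

lemma AC_zero0: assumes A: "(A :: real mat) \<in> carrier_mat p k" shows "append_cols A (0\<^sub>m p 0) = A"
  by (rule eq_matI, insert A, auto simp: AC_index[OF A])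

lemma AC_mult_vec: assumes A: "(A :: real mat) \<in> carrier_mat p k1" and B: "B \<in> carrier_mat p k2"
  and x: "x \<in> carrier_vec k1" and y: "y \<in> carrier_vec k2"
  shows "append_cols A B *\<^sub>v (x @\<^sub>v y) = A *\<^sub>v x + B *\<^sub>v y"
proof (rule eq_vecI)
  fix i assume "i < dim_vec (A *\<^sub>v x + B *\<^sub>v y)"
  hence i: "i < p" using A B by auto
  have "(append_cols A B *\<^sub>v (x @\<^sub>v y)) $ i = (row A i @\<^sub>v row B i) \<bullet> (x @\<^sub>v y)"
    using i A B by (simp add: row_AC[OF A B i])
  also have "\<dots> = row A i \<bullet> x + row B i \<bullet> y"
    using scalar_prod_append[of "row A i" k1 "row B i" k2 x y] A B x y i by auto
  finally show "(append_cols A B *\<^sub>v (x @\<^sub>v y)) $ i = (A *\<^sub>v x + B *\<^sub>v y) $ i" using i A B by simp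
qed (insert A B, auto)

lemma four_block_AR: assumes A: "(A :: real mat) \<in> carrier_mat p1 q1" and B: "B \<in> carrier_mat p1 q2"
  and C: "C \<in> carrier_mat p2 q1" and D: "D \<in> carrier_mat p2 q2"
  shows "four_block_mat A B C D = append_cols A B @\<^sub>r append_cols C D"
  by (rule eq_matI, insert A B C D, auto simp: AR_index AC_index)

lemma four_block_mult_AR: assumes A: "(A :: real mat) \<in> carrier_mat p1 q1" and B: "B \<in> carrier_mat p1 q2"
  and C: "C \<in> carrier_mat p2 q1" and D: "D \<in> carrier_mat p2 q2"
  and X: "X \<in> carrier_mat q1 s" and W: "W \<in> carrier_mat q2 s"
  shows "four_block_mat A B C D * (X @\<^sub>r W) = (A * X + B * W) @\<^sub>r (C * X + D * W)"
  unfolding four_block_AR[OF A B C D]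
  by (subst AR_mult[of _ "q1 + q2" s], insert A B C D X W, auto simp: AC_mult_AR)

lemma AC_mult_four_block: assumes A: "(A :: real mat) \<in> carrier_mat q1 p1" and B: "B \<in> carrier_mat q1 p2"
  and C: "C \<in> carrier_mat q2 p1" and D: "D \<in> carrier_mat q2 p2"
  and X: "X \<in> carrier_mat s q1" and W: "W \<in> carrier_mat s q2"
  shows "append_cols X W * four_block_mat A B C D = append_cols (X * A + W * C) (X * B + W * D)"
proof -
  have "four_block_mat A B C D = append_cols (A @\<^sub>r C) (B @\<^sub>r D)"
    by (rule eq_matI, insert A B C D, auto simp: AR_index AC_index)
  hence "append_cols X W * four_block_mat A B C D = append_cols (append_cols X W * (A @\<^sub>r C)) (append_cols X W * (B @\<^sub>r D))"
    using mult_AC[of "append_cols X W" s "q1 + q2" "A @\<^sub>r C" p1 "B @\<^sub>r D" p2] A B C D X W by auto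
  thus ?thesis using AC_mult_AR A B C D X W by auto
qed

lemma quad_RtR: assumes R: "(R :: real mat) \<in> carrier_mat p k" and x: "x \<in> carrier_vec k"
  shows "x \<bullet> ((transpose_mat R * R) *\<^sub>v x) = (R *\<^sub>v x) \<bullet> (R *\<^sub>v x)"
proof -
  have "(transpose_mat R * R) *\<^sub>v x = transpose_mat R *\<^sub>v (R *\<^sub>v x)" using R x by auto
  hence "x \<bullet> ((transpose_mat R * R) *\<^sub>v x) = (transpose_mat R *\<^sub>v (R *\<^sub>v x)) \<bullet> x"
    using R x by (simp add: comm_scalar_prod[of x k])
  also have "\<dots> = (R *\<^sub>v x) \<bullet> (R *\<^sub>v x)"
    by (rule transpose_vec_mult_scalar[OF R x], insert R x, auto)
  finally show ?thesis .
qed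

lemma self_scalar_zero: assumes "(v :: real vec) \<in> carrier_vec n" and "v \<bullet> v = 0" shows "v = 0\<^sub>v n"
proof (rule eq_vecI)
  fix i assume i: "i < dim_vec (0\<^sub>v n :: real vec)"
  have "v \<bullet> v = (\<Sum>j\<in>{0..<n}. v $ j * v $ j)" using assms unfolding scalar_prod_def by auto
  hence s: "(\<Sum>j\<in>{0..<n}. v $ j * v $ j) = 0" using assms by auto
  have "\<forall>j\<in>{0..<n}. v $ j * v $ j = 0"
    by (rule sum_nonneg_eq_0_iff[THEN iffD1, OF _ _ s], auto)
  thus "v $ i = 0\<^sub>v n $ i" using i by auto
qed (insert assms, auto)

lemma self_scalar_nonneg: "0 \<le> (v :: real vec) \<bullet> v"
  unfolding scalar_prod_def by (rule sum_nonneg, auto)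

lemma sym_pd_tk: assumes P: "P \<in> carrier_mat k k" "sym_pd P" and R: "(R :: real mat) \<in> carrier_mat k k" 
  and PR: "P = transpose_mat R * R" shows "tk R"
proof (rule tkI[OF R])
  fix x assume x: "x \<in> carrier_vec k" and Rx: "R *\<^sub>v x = 0\<^sub>v k"
  show "x = 0\<^sub>v k"
  proof (rule ccontr)
    assume "x \<noteq> 0\<^sub>v k"
    hence "0 < x \<bullet> (P *\<^sub>v x)" using P x unfolding sym_pd_def by auto
    also have "P *\<^sub>v x = transpose_mat R *\<^sub>v (R *\<^sub>v x)" using PR R x by auto
    also have "\<dots> = 0\<^sub>v k" using Rx R by auto
    finally show False using x by auto
  qed
qed

lemma transpose_smult: "transpose_mat ((c :: real) \<cdot>\<^sub>m A) = c \<cdot>\<^sub>m transpose_mat A"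
  by (rule eq_matI, auto)

lemma smult_mat_mult_vec: assumes A: "(A :: real mat) \<in> carrier_mat p q" and v: "v \<in> carrier_vec q"
  shows "(c \<cdot>\<^sub>m A) *\<^sub>v v = c \<cdot>\<^sub>v (A *\<^sub>v v)"
proof (rule eq_vecI)
  fix i assume "i < dim_vec (c \<cdot>\<^sub>v (A *\<^sub>v v))"
  hence i: "i < p" using A by auto
  have "row (c \<cdot>\<^sub>m A) i = c \<cdot>\<^sub>v row A i" by (rule eq_vecI, insert A i, auto)
  thus "((c \<cdot>\<^sub>m A) *\<^sub>v v) $ i = (c \<cdot>\<^sub>v (A *\<^sub>v v)) $ i" using i A v by simp
qed (insert A, auto)

lemma zero_append_vec: "0\<^sub>v (n1 + n2) = (0\<^sub>v n1 @\<^sub>v 0\<^sub>v n2 :: real vec)"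
  by (rule eq_vecI, auto)

lemma cholesky_step_dec:
  assumes P: "(P :: real mat) \<in> carrier_mat (Suc k) (Suc k)"
  shows "P = four_block_mat (P $$ (0,0) \<cdot>\<^sub>m 1\<^sub>m 1) (mat 1 k (\<lambda>(i,j). P $$ (0, Suc j)))
     (mat k 1 (\<lambda>(i,j). P $$ (Suc i, 0))) (mat k k (\<lambda>(i,j). P $$ (Suc i, Suc j)))"
proof (rule eq_matI)
  fix i j assume i: "i < dim_row (four_block_mat (P $$ (0,0) \<cdot>\<^sub>m 1\<^sub>m 1) (mat 1 k (\<lambda>(i,j). P $$ (0, Suc j)))
     (mat k 1 (\<lambda>(i,j). P $$ (Suc i, 0))) (mat k k (\<lambda>(i,j). P $$ (Suc i, Suc j))))"
   and j: "j < dim_col (four_block_mat (P $$ (0,0) \<cdot>\<^sub>m 1\<^sub>m 1) (mat 1 k (\<lambda>(i,j). P $$ (0, Suc j)))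
     (mat k 1 (\<lambda>(i,j). P $$ (Suc i, 0))) (mat k k (\<lambda>(i,j). P $$ (Suc i, Suc j))))"
  hence i: "i < Suc k" and j: "j < Suc k" by auto
  show "P $$ (i, j) = four_block_mat (P $$ (0,0) \<cdot>\<^sub>m 1\<^sub>m 1) (mat 1 k (\<lambda>(i,j). P $$ (0, Suc j)))
     (mat k 1 (\<lambda>(i,j). P $$ (Suc i, 0))) (mat k k (\<lambda>(i,j). P $$ (Suc i, Suc j))) $$ (i, j)"
    using i j by (cases i; cases j, auto)
qed (insert P, auto)

lemma cholesky: "(P :: real mat) \<in> carrier_mat k k \<Longrightarrow> sym_pd P \<Longrightarrow> \<exists>R \<in> carrier_mat k k. P = transpose_mat R * R"
proof (induction k arbitrary: P)
  case 0
  show ?case by (rule bexI[of _ "1\<^sub>m 0"], rule eq_matI, insert 0(1), auto)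
next
  case (Suc k)
  have P: "P \<in> carrier_mat (Suc k) (Suc k)" using Suc.prems by auto
  have sym: "transpose_mat P = P" and pos: "\<And>x. x \<in> carrier_vec (Suc k) \<Longrightarrow> x \<noteq> 0\<^sub>v (Suc k) \<Longrightarrow> 0 < x \<bullet> (P *\<^sub>v x)"
    using Suc.prems P unfolding sym_pd_def by auto
  define a where "a = P $$ (0,0)"
  define P2 where "P2 = mat 1 k (\<lambda>(i,j). P $$ (0, Suc j))"
  define P3 where "P3 = mat k 1 (\<lambda>(i,j). P $$ (Suc i, 0))"
  define P4 where "P4 = mat k k (\<lambda>(i,j). P $$ (Suc i, Suc j))"
  have P2: "P2 \<in> carrier_mat 1 k" and P3: "P3 \<in> carrier_mat k 1" and P4: "P4 \<in> carrier_mat k k"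
    unfolding P2_def P3_def P4_def by auto
  have a1: "a \<cdot>\<^sub>m 1\<^sub>m 1 \<in> carrier_mat 1 1" by auto
  have Pdec: "P = four_block_mat (a \<cdot>\<^sub>m 1\<^sub>m 1) P2 P3 P4"
    unfolding a_def P2_def P3_def P4_def by (rule cholesky_step_dec[OF P])
  have symP: "P $$ (i,j) = P $$ (j,i)" if "i < Suc k" "j < Suc k" for i j
  proof -
    have "transpose_mat P $$ (j,i) = P $$ (j,i)" using sym by simp
    thus ?thesis using that P by auto
  qed
  have P3T: "P3 = transpose_mat P2"
    by (rule eq_matI, insert symP, auto simp: P2_def P3_def)
  have P4T: "transpose_mat P4 = P4"
    by (rule eq_matI, insert symP, auto simp: P4_def)
  have a_pos: "0 < a"
  proof -
    have "unit_vec (Suc k) 0 \<bullet> (P *\<^sub>v unit_vec (Suc k) 0) = a"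
    proof -
      have c: "col P 0 \<in> carrier_vec (Suc k)" using P by (intro carrier_vecI, simp)
      show ?thesis unfolding col_unit[OF P, of 0, simplified] 
        using scalar_prod_left_unit[OF c, of 0] P by (simp add: a_def)
    qed
    moreover have "0 < unit_vec (Suc k) 0 \<bullet> (P *\<^sub>v unit_vec (Suc k) 0)"
      by (rule pos, auto)
    ultimately show ?thesis by simp
  qed
  define S where "S = P4 - (1/a) \<cdot>\<^sub>m (P3 * P2)"
  have P32: "P3 * P2 \<in> carrier_mat k k" using P3 P2 by auto
  have S: "S \<in> carrier_mat k k" unfolding S_def using P4 P32 by (intro minus_carrier_mat smult_carrier_mat)
  have "sym_pd S"
    unfolding sym_pd_def
  proof (intro conjI ballI impI)
    show "square_mat S" using S by auto
    have "transpose_mat (P3 * P2) = P3 * P2"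
      using transpose_mult[OF P3 P2] P3T by simp
    thus "transpose_mat S = S" unfolding S_def
      using transpose_minus[OF P4 smult_carrier_mat[OF P32]] P4T transpose_smult by simp
    fix y :: "real vec" assume y: "y \<in> carrier_vec (dim_col S)" and y0: "y \<noteq> 0\<^sub>v (dim_col S)"
    hence y: "y \<in> carrier_vec k" and y0: "y \<noteq> 0\<^sub>v k" using S by auto
    define w where "w = P2 *\<^sub>v y"
    have w: "w \<in> carrier_vec 1" unfolding w_def using P2 y by auto
    define u where "u = (- (1/a)) \<cdot>\<^sub>v w"
    have u: "u \<in> carrier_vec 1" unfolding u_def using w by auto
    define x where "x = u @\<^sub>v y"
    have x: "x \<in> carrier_vec (Suc k)" unfolding x_def using append_carrier_vec[OF u y] by simp
    have x0: "x \<noteq> 0\<^sub>v (Suc k)"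
    proof
      assume "x = 0\<^sub>v (Suc k)"
      hence "u @\<^sub>v y = 0\<^sub>v 1 @\<^sub>v 0\<^sub>v k" unfolding x_def using zero_append_vec[of 1 k] by simp
      hence "y = 0\<^sub>v k" using append_vec_eq[OF u, of "0\<^sub>v 1"] by auto
      thus False using y0 by auto
    qed
    have e1: "(a \<cdot>\<^sub>m 1\<^sub>m 1) *\<^sub>v u + P2 *\<^sub>v y = 0\<^sub>v 1"
      by (rule eq_vecI, insert u w a_pos, auto simp: u_def w_def[symmetric] scalar_prod_def)
    have "P *\<^sub>v x = ((a \<cdot>\<^sub>m 1\<^sub>m 1) *\<^sub>v u + P2 *\<^sub>v y) @\<^sub>v (P3 *\<^sub>v u + P4 *\<^sub>v y)"
      unfolding x_def by (subst Pdec, rule four_block_mat_mult_vec[OF a1 P2 P3 P4 u y])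
    hence Px: "P *\<^sub>v x = 0\<^sub>v 1 @\<^sub>v (P3 *\<^sub>v u + P4 *\<^sub>v y)" using e1 by simp
    have "x \<bullet> (P *\<^sub>v x) = u \<bullet> 0\<^sub>v 1 + y \<bullet> (P3 *\<^sub>v u + P4 *\<^sub>v y)"
      unfolding Px unfolding x_def by (rule scalar_prod_append[OF u y], insert P3 P4 u y, auto)
    also have "\<dots> = y \<bullet> (P3 *\<^sub>v u) + y \<bullet> (P4 *\<^sub>v y)"
      using u y P3 P4 by (simp add: scalar_prod_add_distrib[of y k])
    also have "P3 *\<^sub>v u = (- (1/a)) \<cdot>\<^sub>v ((P3 * P2) *\<^sub>v y)"
      unfolding u_def w_def using P3 P2 y by (simp add: mult_mat_vec)
    also have "y \<bullet> ((- (1/a)) \<cdot>\<^sub>v ((P3 * P2) *\<^sub>v y)) + y \<bullet> (P4 *\<^sub>v y) = y \<bullet> (S *\<^sub>v y)"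
    proof -
      have "S *\<^sub>v y = P4 *\<^sub>v y - ((1/a) \<cdot>\<^sub>m (P3 * P2)) *\<^sub>v y" 
        unfolding S_def by (rule minus_mult_distrib_mat_vec[OF P4 _ y], insert P32, auto)
      also have "((1/a) \<cdot>\<^sub>m (P3 * P2)) *\<^sub>v y = (1/a) \<cdot>\<^sub>v ((P3 * P2) *\<^sub>v y)"
        using P32 y by (simp add: smult_mat_mult_vec)
      finally have "S *\<^sub>v y = P4 *\<^sub>v y - (1/a) \<cdot>\<^sub>v ((P3 * P2) *\<^sub>v y)" .
      moreover have "y \<bullet> (P4 *\<^sub>v y - (1/a) \<cdot>\<^sub>v ((P3 * P2) *\<^sub>v y)) = y \<bullet> (P4 *\<^sub>v y) - (1/a) * (y \<bullet> ((P3 * P2) *\<^sub>v y))"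
        using y P4 P32 by (simp add: scalar_prod_minus_distrib[of y k])
      ultimately show ?thesis using y P4 P32 by simp
    qed
    finally have "x \<bullet> (P *\<^sub>v x) = y \<bullet> (S *\<^sub>v y)" .
    thus "0 < y \<bullet> (S *\<^sub>v y)" using pos[OF x x0] by simp
  qed
  from Suc.IH[OF S this] obtain R' where R': "R' \<in> carrier_mat k k" and SR: "S = transpose_mat R' * R'" by auto
  define sa where "sa = sqrt a"
  have sa: "0 < sa" "sa * sa = a" unfolding sa_def using a_pos by auto
  define R1 where "R1 = sa \<cdot>\<^sub>m 1\<^sub>m 1"
  have R1: "R1 \<in> carrier_mat 1 1" unfolding R1_def by auto
  have R1T: "transpose_mat R1 = R1" unfolding R1_def transpose_smult by simp
  define R where "R = four_block_mat R1 ((1/sa) \<cdot>\<^sub>m P2) (0\<^sub>m k 1) R'"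
  have Rc: "R \<in> carrier_mat (Suc k) (Suc k)" unfolding R_def using R1 R' by auto
  have RT: "transpose_mat R = four_block_mat R1 (0\<^sub>m 1 k) ((1/sa) \<cdot>\<^sub>m P3) (transpose_mat R')"
    unfolding R_def using transpose_four_block_mat[OF R1 smult_carrier_mat[OF P2] zero_carrier_mat R'] R1T
    P3T transpose_smult by simp
  have "transpose_mat R * R = four_block_mat (R1 * R1 + 0\<^sub>m 1 k * 0\<^sub>m k 1) (R1 * ((1/sa) \<cdot>\<^sub>m P2) + 0\<^sub>m 1 k * R')
     ((1/sa) \<cdot>\<^sub>m P3 * R1 + transpose_mat R' * 0\<^sub>m k 1) ((1/sa) \<cdot>\<^sub>m P3 * ((1/sa) \<cdot>\<^sub>m P2) + transpose_mat R' * R')"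
    unfolding RT unfolding R_def
    by (rule mult_four_block_mat, insert R1 P2 P3 R', auto)
  also have "R1 * R1 + 0\<^sub>m 1 k * 0\<^sub>m k 1 = a \<cdot>\<^sub>m 1\<^sub>m 1"
    by (rule eq_matI, insert sa, auto simp: R1_def scalar_prod_def)
  also have "R1 * ((1/sa) \<cdot>\<^sub>m P2) + 0\<^sub>m 1 k * R' = P2"
    by (rule eq_matI, insert sa P2 R', auto simp: R1_def scalar_prod_def)
  also have "(1/sa) \<cdot>\<^sub>m P3 * R1 + transpose_mat R' * 0\<^sub>m k 1 = P3"
    by (rule eq_matI, insert sa P3 R', auto simp: R1_def scalar_prod_def)
  also have "(1/sa) \<cdot>\<^sub>m P3 * ((1/sa) \<cdot>\<^sub>m P2) + transpose_mat R' * R' = P4"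
  proof -
    have "(1/sa) \<cdot>\<^sub>m P3 * ((1/sa) \<cdot>\<^sub>m P2) = (1/a) \<cdot>\<^sub>m (P3 * P2)"
      by (rule eq_matI, insert sa P3 P2, auto simp: scalar_prod_def sum_distrib_left field_simps)
    moreover have "dim_row P4 = k" "dim_col P4 = k" "dim_row (P3 * P2) = k" "dim_col (P3 * P2) = k"
      using P4 P32 by auto
    ultimately show ?thesis unfolding SR[symmetric] S_def 
      by (intro eq_matI, auto)
  qed
  finally show ?case using Rc Pdec by (intro bexI[of _ R], auto)
qed

lemma kernel_mat: assumes A: "(A :: real mat) \<in> carrier_mat p q"
  shows "\<exists>k K. K \<in> carrier_mat q k \<and> tk K \<and> A * K = 0\<^sub>m p k \<and> (\<forall>x \<in> mat_kernel A. \<exists>y \<in> carrier_vec k. x = K *\<^sub>v y)"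
proof -
  interpret kernel p q A by (unfold_locales, rule A)
  obtain Bs where fin: "finite Bs" and bas: "basis Bs" using kernel_basis_exists[OF A] by auto
  have Bsk: "Bs \<subseteq> mat_kernel A" and li: "\<not> NC.lin_dep Bs" and sp: "NC.span Bs = mat_kernel A"
    using bas unfolding Ker.basis_def using lindep_same span_same by auto
  obtain ws where ws: "set ws = Bs" "distinct ws" using finite_distinct_list[OF fin] by auto
  have wsc: "set ws \<subseteq> carrier_vec q" using Bsk ws mat_kernel[OF A] by auto
  define K where "K = mat_of_cols q ws"
  have K: "K \<in> carrier_mat q (length ws)" unfolding K_def by auto
  have cK: "cols K = ws" unfolding K_def using wsc by simp
  have tkK: "tk K"
  proof (rule tkI[OF K])
    fix x assume x: "x \<in> carrier_vec (length ws)" "K *\<^sub>v x = 0\<^sub>v q"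
    show "x = 0\<^sub>v (length ws)"
    proof (rule ccontr)
      assume "x \<noteq> 0\<^sub>v (length ws)"
      from NC.lin_depI[OF K x(1) this x(2)] cK ws have "NC.lin_dep Bs" by auto
      with li show False by auto
    qed
  qed
  have AK: "A * K = 0\<^sub>m p (length ws)"
  proof (rule eq_matI)
    fix i j assume "i < dim_row (0\<^sub>m p (length ws) :: real mat)" "j < dim_col (0\<^sub>m p (length ws) :: real mat)"
    hence i: "i < p" and j: "j < length ws" by auto
    have "col K j = ws ! j" using cK j K by (metis cols_nth carrier_matD(2))
    hence "col K j \<in> mat_kernel A" using ws j Bsk by auto
    hence "A *\<^sub>v col K j = 0\<^sub>v p" using mat_kernel[OF A] by auto
    hence "(A *\<^sub>v col K j) $ i = 0" using i by auto
    thus "(A * K) $$ (i,j) = 0\<^sub>m p (length ws) $$ (i,j)" using i j A K by auto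
  qed (insert A K, auto)
  have "\<forall>x \<in> mat_kernel A. \<exists>y \<in> carrier_vec (length ws). x = K *\<^sub>v y"
  proof
    fix x assume "x \<in> mat_kernel A"
    hence "x \<in> NC.col_space K" unfolding NC.col_space_def cK ws(1) sp .
    thus "\<exists>y \<in> carrier_vec (length ws). x = K *\<^sub>v y" unfolding NC.col_space_eq[OF K] using K by auto
  qed
  thus ?thesis using K tkK AK by blast
qed

lemma gram_sym_pd: assumes K: "(K :: real mat) \<in> carrier_mat q k" and tk: "tk K"
  shows "sym_pd (transpose_mat K * K)"
  unfolding sym_pd_def
proof (intro conjI ballI impI)
  show "square_mat (transpose_mat K * K)" using K by auto
  show "transpose_mat (transpose_mat K * K) = transpose_mat K * K"
    using transpose_mult[of "transpose_mat K" k q K k] K by auto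
  fix x :: "real vec" assume x: "x \<in> carrier_vec (dim_col (transpose_mat K * K))" and x0: "x \<noteq> 0\<^sub>v (dim_col (transpose_mat K * K))"
  hence x: "x \<in> carrier_vec k" and x0: "x \<noteq> 0\<^sub>v k" using K by auto
  have "K *\<^sub>v x \<noteq> 0\<^sub>v q" using tkD[OF tk K x] x0 by auto
  hence "(K *\<^sub>v x) \<bullet> (K *\<^sub>v x) \<noteq> 0" using self_scalar_zero[of "K *\<^sub>v x" q] K x by auto
  hence "0 < (K *\<^sub>v x) \<bullet> (K *\<^sub>v x)" using self_scalar_nonneg[of "K *\<^sub>v x"] by linarith
  thus "0 < x \<bullet> ((transpose_mat K * K) *\<^sub>v x)" using quad_RtR[OF K x] by simp
qed

lemma onb_kernel: assumes A: "(A :: real mat) \<in> carrier_mat p q"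
  shows "\<exists>k K. K \<in> carrier_mat q k \<and> transpose_mat K * K = 1\<^sub>m k \<and> A * K = 0\<^sub>m p k \<and>
    (\<forall>x \<in> mat_kernel A. \<exists>y \<in> carrier_vec k. x = K *\<^sub>v y)"
proof -
  obtain k K0 where K0: "K0 \<in> carrier_mat q k" and tk: "tk K0" and AK0: "A * K0 = 0\<^sub>m p k"
    and sp: "\<forall>x \<in> mat_kernel A. \<exists>y \<in> carrier_vec k. x = K0 *\<^sub>v y"
    using kernel_mat[OF A] by blast
  have G: "transpose_mat K0 * K0 \<in> carrier_mat k k" using K0 by auto
  obtain R where R: "R \<in> carrier_mat k k" and GR: "transpose_mat K0 * K0 = transpose_mat R * R"
    using cholesky[OF G gram_sym_pd[OF K0 tk]] by auto
  have tkR: "tk R" by (rule sym_pd_tk[OF G gram_sym_pd[OF K0 tk] R GR])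
  obtain Ri where Ri: "Ri \<in> carrier_mat k k" and RRi: "R * Ri = 1\<^sub>m k" and RiR: "Ri * R = 1\<^sub>m k"
    using tk_inv[OF R tkR] by metis
  define K where "K = K0 * Ri"
  have K: "K \<in> carrier_mat q k" unfolding K_def using K0 Ri by auto
  have KT: "transpose_mat K = transpose_mat Ri * transpose_mat K0" unfolding K_def by (rule transpose_mult[OF K0 Ri])
  have "transpose_mat K * K = transpose_mat Ri * (transpose_mat K0 * K0) * Ri"
    unfolding KT unfolding K_def using K0 Ri
    by (simp add: assoc_mult_mat[of "transpose_mat Ri" k k "transpose_mat K0" q "K0 * Ri" k]
      assoc_mult_mat[of "transpose_mat K0" k q K0 k Ri k] 
      assoc_mult_mat[of "transpose_mat Ri" k k "transpose_mat K0 * K0" k Ri k])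
  also have "\<dots> = (transpose_mat Ri * transpose_mat R) * (R * Ri)"
    unfolding GR using R Ri
    by (simp add: assoc_mult_mat[of "transpose_mat Ri" k k "transpose_mat R * R" k Ri k]
      assoc_mult_mat[of "transpose_mat Ri" k k "transpose_mat R" k "R * Ri" k]
      assoc_mult_mat[of "transpose_mat R" k k R k Ri k])
  also have "transpose_mat Ri * transpose_mat R = transpose_mat (R * Ri)"
    by (rule transpose_mult[OF R Ri, symmetric])
  also have "\<dots> * (R * Ri) = 1\<^sub>m k" unfolding RRi by simp
  finally have KK: "transpose_mat K * K = 1\<^sub>m k" .
  have AK: "A * K = 0\<^sub>m p k" unfolding K_def 
    using assoc_mult_mat[OF A K0 Ri, symmetric] AK0 Ri by simp
  have "\<forall>x \<in> mat_kernel A. \<exists>y \<in> carrier_vec k. x = K *\<^sub>v y"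
  proof
    fix x assume "x \<in> mat_kernel A"
    then obtain y where y: "y \<in> carrier_vec k" and x: "x = K0 *\<^sub>v y" using sp by auto
    have "K *\<^sub>v (R *\<^sub>v y) = K0 *\<^sub>v ((Ri * R) *\<^sub>v y)" unfolding K_def using K0 Ri R y by simp
    also have "\<dots> = x" unfolding RiR x using y by simp
    finally show "\<exists>y \<in> carrier_vec k. x = K *\<^sub>v y" using R y by (intro bexI[of _ "R *\<^sub>v y"], auto)
  qed
  thus ?thesis using K KK AK by blast
qed

lemma mat_vec_zero: assumes "(A :: real mat) \<in> carrier_mat p q" shows "A *\<^sub>v 0\<^sub>v q = 0\<^sub>v p"
  by (rule eq_vecI, insert assms, auto)

lemma zero_mat_vec: assumes "y \<in> carrier_vec q" shows "(0\<^sub>m p q :: real mat) *\<^sub>v y = 0\<^sub>v p"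
  by (rule eq_vecI, insert assms, auto)

lemma orth_AC: assumes V1: "(V1 :: real mat) \<in> carrier_mat q d" and V2: "V2 \<in> carrier_mat q e"
  and o1: "transpose_mat V1 * V1 = 1\<^sub>m d" and o2: "transpose_mat V2 * V2 = 1\<^sub>m e" 
  and o12: "transpose_mat V1 * V2 = 0\<^sub>m d e"
  shows "transpose_mat (append_cols V1 V2) * append_cols V1 V2 = 1\<^sub>m (d + e)"
proof -
  have o21: "transpose_mat V2 * V1 = 0\<^sub>m e d"
  proof -
    have "transpose_mat (transpose_mat V1 * V2) = transpose_mat V2 * V1"
      using transpose_mult[of "transpose_mat V1" d q V2 e] V1 V2 by simp
    thus ?thesis using o12 by simp
  qed
  show ?thesis unfolding transpose_AC[OF V1 V2]
    by (subst AR_mult_AC[of _ d q _ e], insert V1 V2 o1 o2 o12 o21, auto)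
qed

lemma struct_decomp: assumes A: "(A :: real mat) \<in> carrier_mat p q"
  shows "\<exists>d V1 V2. d \<le> q \<and> V1 \<in> carrier_mat q d \<and> V2 \<in> carrier_mat q (q - d) \<and>
    transpose_mat V1 * V1 = 1\<^sub>m d \<and> transpose_mat V2 * V2 = 1\<^sub>m (q - d) \<and> transpose_mat V1 * V2 = 0\<^sub>m d (q - d) \<and>
    tk (A * V1) \<and> A * V2 = 0\<^sub>m p (q - d) \<and> (\<forall>x\<in>mat_kernel A. \<exists>y\<in>carrier_vec (q - d). x = V2 *\<^sub>v y)"
proof -
  obtain k K where K: "K \<in> carrier_mat q k" and KK: "transpose_mat K * K = 1\<^sub>m k" and AK: "A * K = 0\<^sub>m p k"
    and spK: "\<forall>x \<in> mat_kernel A. \<exists>y \<in> carrier_vec k. x = K *\<^sub>v y"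
    using onb_kernel[OF A] by blast
  have KT: "transpose_mat K \<in> carrier_mat k q" using K by auto
  obtain l L where L: "L \<in> carrier_mat q l" and LL: "transpose_mat L * L = 1\<^sub>m l" and KL: "transpose_mat K * L = 0\<^sub>m k l"
    and spL: "\<forall>x \<in> mat_kernel (transpose_mat K). \<exists>y \<in> carrier_vec l. x = L *\<^sub>v y"
    using onb_kernel[OF KT] by blast
  have LK: "transpose_mat L * K = 0\<^sub>m l k"
  proof -
    have "transpose_mat (transpose_mat K * L) = transpose_mat L * K"
      using transpose_mult[of "transpose_mat K" k q L l] K L by simp
    thus ?thesis using KL by simp
  qed
  define Q where "Q = append_cols L K"
  have Q: "Q \<in> carrier_mat q (l + k)" unfolding Q_def using L K by auto
  have QQ: "transpose_mat Q * Q = 1\<^sub>m (l + k)" unfolding Q_def by (rule orth_AC[OF L K LL KK LK])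
  have "transpose_mat Q \<in> carrier_mat (l + k) q" using Q by auto
  have le1: "l + k \<le> q" using tk_rows[OF Q left_inv_tk[OF Q _ QQ]] Q by auto
  have tkQT: "tk (transpose_mat Q)"
  proof (rule tkI)
    show "transpose_mat Q \<in> carrier_mat (l + k) q" using Q by auto
    fix x assume x: "x \<in> carrier_vec q" and Qx: "transpose_mat Q *\<^sub>v x = 0\<^sub>v (l + k)"
    have "transpose_mat Q *\<^sub>v x = (transpose_mat L *\<^sub>v x) @\<^sub>v (transpose_mat K *\<^sub>v x)"
      unfolding Q_def transpose_AC[OF L K] by (rule mat_mult_append, insert L K x, auto)
    hence "(transpose_mat L *\<^sub>v x) @\<^sub>v (transpose_mat K *\<^sub>v x) = 0\<^sub>v l @\<^sub>v 0\<^sub>v k"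
      using Qx zero_append_vec[of l k] by simp
    hence Lx: "transpose_mat L *\<^sub>v x = 0\<^sub>v l" and Kx: "transpose_mat K *\<^sub>v x = 0\<^sub>v k"
      using append_vec_eq[of "transpose_mat L *\<^sub>v x" l "0\<^sub>v l"] L x by auto
    have "x \<in> mat_kernel (transpose_mat K)" using Kx x KT by (auto simp: mat_kernel[OF KT])
    then obtain y where y: "y \<in> carrier_vec l" and xy: "x = L *\<^sub>v y" using spL by auto
    have "y = (transpose_mat L * L) *\<^sub>v y" using LL y by simp
    also have "\<dots> = transpose_mat L *\<^sub>v x" unfolding xy using L y by simp
    finally have "y = 0\<^sub>v l" using Lx by simp
    thus "x = 0\<^sub>v q" using xy mat_vec_zero[OF L] by simp
  qed
  have le2: "q \<le> l + k" using tk_rows[OF _ tkQT] Q by auto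
  have lk: "k = q - l" "l \<le> q" using le1 le2 by auto
  have tkAL: "tk (A * L)"
  proof (rule tkI)
    show "A * L \<in> carrier_mat p l" using A L by auto
    fix x assume x: "x \<in> carrier_vec l" and ALx: "(A * L) *\<^sub>v x = 0\<^sub>v p"
    have "L *\<^sub>v x \<in> mat_kernel A" using ALx x A L by (auto simp: mat_kernel[OF A])
    then obtain y where y: "y \<in> carrier_vec k" and xy: "L *\<^sub>v x = K *\<^sub>v y" using spK by auto
    have "x = (transpose_mat L * L) *\<^sub>v x" using LL x by simp
    also have "\<dots> = transpose_mat L *\<^sub>v (K *\<^sub>v y)" using L x xy by simp
    also have "\<dots> = (transpose_mat L * K) *\<^sub>v y" using L K y by simp
    also have "\<dots> = 0\<^sub>v l" unfolding LK using zero_mat_vec[OF y] by simp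
    finally show "x = 0\<^sub>v l" .
  qed
  show ?thesis
    by (rule exI[of _ l], rule exI[of _ L], rule exI[of _ K], insert lk L K LL KK LK tkAL AK spK, auto)
qed

lemma split_vec: assumes "(z :: real vec) \<in> carrier_vec (d + e)"
  shows "z = vec_first z d @\<^sub>v vec_last z e"
  using vec_first_last_append[OF assms] by simp

lemma mrank_decomp: assumes A: "(A :: real mat) \<in> carrier_mat p q" and V: "V \<in> carrier_mat q q"
  and Vi: "Vi \<in> carrier_mat q q" and VVi: "V * Vi = 1\<^sub>m q"
  and A1: "A1 \<in> carrier_mat p d" and d: "d \<le> q"
  and AV: "A * V = append_cols A1 (0\<^sub>m p (q - d))"
  shows "mrank A = mrank A1"
proof (rule mrank_range[OF A A1])
  have Z: "(0\<^sub>m p (q - d) :: real mat) \<in> carrier_mat p (q - d)" by auto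
  have qd: "d + (q - d) = q" using d by simp
  show "(\<lambda>x. A *\<^sub>v x) ` carrier_vec q = (\<lambda>x. A1 *\<^sub>v x) ` carrier_vec d"
  proof (rule Set.set_eqI, rule iffI)
    fix y assume "y \<in> (\<lambda>x. A *\<^sub>v x) ` carrier_vec q"
    then obtain x where x: "x \<in> carrier_vec q" and y: "y = A *\<^sub>v x" by auto
    define z where "z = Vi *\<^sub>v x"
    have z: "z \<in> carrier_vec (d + (q - d))" unfolding z_def using Vi x qd by simp
    have "A *\<^sub>v x = A *\<^sub>v ((V * Vi) *\<^sub>v x)" unfolding VVi using x by simp
    also have "\<dots> = (A * V) *\<^sub>v z" unfolding z_def using A V Vi x by simp
    also have "\<dots> = append_cols A1 (0\<^sub>m p (q - d)) *\<^sub>v (vec_first z d @\<^sub>v vec_last z (q - d))"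
      unfolding AV using split_vec[OF z] by simp
    also have "\<dots> = A1 *\<^sub>v vec_first z d + 0\<^sub>m p (q - d) *\<^sub>v vec_last z (q - d)"
      by (rule AC_mult_vec[OF A1 Z], auto)
    also have "\<dots> = A1 *\<^sub>v vec_first z d" using zero_mat_vec[of "vec_last z (q - d)" "q - d" p] A1 by simp
    finally show "y \<in> (\<lambda>x. A1 *\<^sub>v x) ` carrier_vec d" using y by auto
  next
    fix y assume "y \<in> (\<lambda>x. A1 *\<^sub>v x) ` carrier_vec d"
    then obtain x where x: "x \<in> carrier_vec d" and y: "y = A1 *\<^sub>v x" by auto
    define z where "z = x @\<^sub>v 0\<^sub>v (q - d)"
    have z: "z \<in> carrier_vec q" unfolding z_def using x qd append_carrier_vec[OF x, of "0\<^sub>v (q - d)" "q - d"] by simp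
    have "A *\<^sub>v (V *\<^sub>v z) = (A * V) *\<^sub>v z" using A V z by simp
    also have "\<dots> = A1 *\<^sub>v x + 0\<^sub>m p (q - d) *\<^sub>v 0\<^sub>v (q - d)" unfolding AV z_def
      by (rule AC_mult_vec[OF A1 Z x], auto)
    also have "\<dots> = A1 *\<^sub>v x" using zero_mat_vec[of "0\<^sub>v (q - d)" "q - d" p] A1 x by simp
    finally have "y = A *\<^sub>v (V *\<^sub>v z)" using y by simp
    moreover have "V *\<^sub>v z \<in> carrier_vec q" using V z by simp
    ultimately show "y \<in> (\<lambda>x. A *\<^sub>v x) ` carrier_vec q" by auto
  qed
qed

lemma orth_square: assumes V: "(V :: real mat) \<in> carrier_mat q q" and VV: "transpose_mat V * V = 1\<^sub>m q"
  shows "V * transpose_mat V = 1\<^sub>m q"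
  by (rule mat_mult_left_right_inverse[of "transpose_mat V" q V, OF _ V VV], insert V, auto)

lemma decomp_full: assumes A: "(A :: real mat) \<in> carrier_mat p q"
  shows "\<exists>d V1 V2. d \<le> q \<and> V1 \<in> carrier_mat q d \<and> V2 \<in> carrier_mat q (q - d) \<and>
    transpose_mat V1 * V1 = 1\<^sub>m d \<and> transpose_mat V2 * V2 = 1\<^sub>m (q - d) \<and> transpose_mat V1 * V2 = 0\<^sub>m d (q - d) \<and>
    tk (A * V1) \<and> A * V2 = 0\<^sub>m p (q - d) \<and> (\<forall>x\<in>mat_kernel A. \<exists>y\<in>carrier_vec (q - d). x = V2 *\<^sub>v y) \<and>
    append_cols V1 V2 \<in> carrier_mat q q \<and>
    transpose_mat (append_cols V1 V2) * append_cols V1 V2 = 1\<^sub>m q \<and>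
    append_cols V1 V2 * transpose_mat (append_cols V1 V2) = 1\<^sub>m q \<and>
    A * append_cols V1 V2 = append_cols (A * V1) (0\<^sub>m p (q - d)) \<and> mrank A = d"
proof -
  obtain d V1 V2 where d: "d \<le> q" and V1: "V1 \<in> carrier_mat q d" and V2: "V2 \<in> carrier_mat q (q - d)"
    and o1: "transpose_mat V1 * V1 = 1\<^sub>m d" and o2: "transpose_mat V2 * V2 = 1\<^sub>m (q - d)"
    and o12: "transpose_mat V1 * V2 = 0\<^sub>m d (q - d)" and tk: "tk (A * V1)" and AV2: "A * V2 = 0\<^sub>m p (q - d)"
    and sp: "\<forall>x\<in>mat_kernel A. \<exists>y\<in>carrier_vec (q - d). x = V2 *\<^sub>v y"
    using struct_decomp[OF A] by blast
  define V where "V = append_cols V1 V2"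
  have V: "V \<in> carrier_mat q q" unfolding V_def using AC_carrier[OF V1 V2] d by simp
  have VV: "transpose_mat V * V = 1\<^sub>m q" unfolding V_def using orth_AC[OF V1 V2 o1 o2 o12] d by simp
  have VV': "V * transpose_mat V = 1\<^sub>m q" by (rule orth_square[OF V VV])
  have AV: "A * V = append_cols (A * V1) (0\<^sub>m p (q - d))" unfolding V_def
    using mult_AC[OF A V1 V2] AV2 by simp
  have "mrank A = mrank (A * V1)"
    by (rule mrank_decomp[OF A V _ VV' _ d AV], insert V A V1, auto)
  also have "\<dots> = d" by (rule mrank_tk[OF _ tk], insert A V1, auto)
  finally have rk: "mrank A = d" .
  show ?thesis
    by (rule exI[of _ d], rule exI[of _ V1], rule exI[of _ V2], 
      insert d V1 V2 o1 o2 o12 tk AV2 sp V VV VV' AV rk, unfold V_def, auto)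
qed

lemma full_rank_tk: assumes A: "(A :: real mat) \<in> carrier_mat p q" and rk: "mrank A = q"
  shows "tk A"
proof -
  obtain d V1 V2 where d: "d \<le> q" and V1: "V1 \<in> carrier_mat q d" and V2: "V2 \<in> carrier_mat q (q - d)"
    and tk: "tk (A * V1)" and V: "append_cols V1 V2 \<in> carrier_mat q q" 
    and VV': "append_cols V1 V2 * transpose_mat (append_cols V1 V2) = 1\<^sub>m q"
    and AV: "A * append_cols V1 V2 = append_cols (A * V1) (0\<^sub>m p (q - d))" and rkd: "mrank A = d"
    using decomp_full[OF A] by blast
  define V where "V = append_cols V1 V2"
  have dq: "d = q" using rk rkd by simp
  have AV1: "A * V1 \<in> carrier_mat p q" using A V1 dq by auto
  have AVe: "A * V = A * V1" unfolding V_def AV dq using AC_zero0[OF AV1] by simp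
  show ?thesis
  proof (rule tkI[OF A])
    fix x assume x: "x \<in> carrier_vec q" and Ax: "A *\<^sub>v x = 0\<^sub>v p"
    have Vc: "V \<in> carrier_mat q q" using V unfolding V_def .
    have "(A * V1) *\<^sub>v (transpose_mat V *\<^sub>v x) = A *\<^sub>v ((V * transpose_mat V) *\<^sub>v x)"
      unfolding AVe[symmetric] using A Vc x by simp
    also have "\<dots> = 0\<^sub>v p" unfolding V_def VV' using x Ax by simp
    finally have "transpose_mat V *\<^sub>v x = 0\<^sub>v q" using tkD[OF tk AV1] Vc x by simp
    hence "V *\<^sub>v (transpose_mat V *\<^sub>v x) = 0\<^sub>v q" using mat_vec_zero[OF Vc] by simp
    moreover have "V *\<^sub>v (transpose_mat V *\<^sub>v x) = x" using Vc x VV' unfolding V_def[symmetric] 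
      by (simp add: assoc_mult_mat_vec[symmetric, of V q q "transpose_mat V" q x])
    ultimately show "x = 0\<^sub>v q" by simp
  qed
qed

lemma assoc': "dim_col (A :: real mat) = dim_row B \<Longrightarrow> dim_col B = dim_row C \<Longrightarrow> (A * B) * C = A * (B * C)"
  by (rule assoc_mult_mat[of A "dim_row A" "dim_col A" B "dim_col B" C "dim_col C"]; rule carrier_matI; simp)

lemma assoc_vec': "dim_col (A :: real mat) = dim_row B \<Longrightarrow> dim_col B = dim_vec v \<Longrightarrow> (A * B) *\<^sub>v v = A *\<^sub>v (B *\<^sub>v v)"
  by (rule assoc_mult_mat_vec[of A "dim_row A" "dim_col A" B "dim_col B" v], auto intro!: carrier_matI carrier_vecI)

lemma transpose_mult': "dim_col (A :: real mat) = dim_row B \<Longrightarrow> transpose_mat (A * B) = transpose_mat B * transpose_mat A"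
  by (rule transpose_mult[of A "dim_row A" "dim_col A" B "dim_col B"]; rule carrier_matI; simp)

lemma inv_transpose: assumes T: "(T :: real mat) \<in> carrier_mat n n" and Ti: "Ti \<in> carrier_mat n n"
  and TTi: "T * Ti = 1\<^sub>m n" shows "transpose_mat Ti * transpose_mat T = 1\<^sub>m n"
  using transpose_mult[OF T Ti] TTi by simp

lemma inv_cond_iff: assumes T: "T \<in> carrier_mat n n" and B: "B \<in> carrier_mat n m" and C: "C \<in> carrier_mat m n"
  shows "inv_cond T B C \<longleftrightarrow> (\<exists>Ti \<in> carrier_mat n n. T * Ti = 1\<^sub>m n \<and> Ti * T = 1\<^sub>m n) \<and> 
     transpose_mat T * T * B = transpose_mat C"
proof
  assume "inv_cond T B C"
  then obtain Ti where i1: "T * Ti = 1\<^sub>m n" and i2: "Ti * T = 1\<^sub>m (dim_row Ti)" and e: "transpose_mat (T * B) = C * Ti"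
    unfolding inv_cond_def inverts_mat_def using T by auto
  have "dim_col Ti = n" using arg_cong[OF i1, of dim_col] by simp
  moreover have "dim_row Ti = n" using arg_cong[OF i2, of dim_col] T by simp
  ultimately have Ti: "Ti \<in> carrier_mat n n" by auto
  have i2: "Ti * T = 1\<^sub>m n" using i2 Ti by simp
  note d = carrier_matD[OF T] carrier_matD[OF Ti] carrier_matD[OF B] carrier_matD[OF C]
  have "C = C * (Ti * T)" unfolding i2 using C by simp
  also have "\<dots> = (C * Ti) * T" using d by (simp add: assoc')
  also have "\<dots> = transpose_mat B * transpose_mat T * T" unfolding e[symmetric] using d by (simp add: transpose_mult')
  finally have "transpose_mat C = transpose_mat (transpose_mat B * transpose_mat T * T)" by simp
  also have "\<dots> = transpose_mat T * T * B" using d by (simp add: transpose_mult' assoc')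
  finally show "(\<exists>Ti \<in> carrier_mat n n. T * Ti = 1\<^sub>m n \<and> Ti * T = 1\<^sub>m n) \<and> transpose_mat T * T * B = transpose_mat C"
    using Ti i1 i2 by auto
next
  assume "(\<exists>Ti \<in> carrier_mat n n. T * Ti = 1\<^sub>m n \<and> Ti * T = 1\<^sub>m n) \<and> transpose_mat T * T * B = transpose_mat C"
  then obtain Ti where Ti: "Ti \<in> carrier_mat n n" and i1: "T * Ti = 1\<^sub>m n" and i2: "Ti * T = 1\<^sub>m n"
    and e: "transpose_mat T * T * B = transpose_mat C" by auto
  note d = carrier_matD[OF T] carrier_matD[OF Ti] carrier_matD[OF B] carrier_matD[OF C]
  have "C = transpose_mat (transpose_mat T * T * B)" unfolding e by simp
  also have "\<dots> = transpose_mat B * (transpose_mat T * T)" using d by (simp add: transpose_mult' assoc')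
  finally have "C * Ti = transpose_mat B * transpose_mat T * (T * Ti)" using d by (simp add: assoc')
  also have "\<dots> = transpose_mat (T * B)" unfolding i1 using d by (simp add: transpose_mult')
  finally have e2: "transpose_mat (T * B) = C * Ti" by simp
  show "inv_cond T B C" unfolding inv_cond_def inverts_mat_def
    by (rule exI[of _ Ti], insert i1 i2 e2 T Ti, auto)
qed

lemma ker_eq_zero: assumes A: "(A :: real mat) \<in> carrier_mat p q" and A': "A' \<in> carrier_mat p' q"
  and X: "X \<in> carrier_mat q s" and ker: "mat_kernel A \<subseteq> mat_kernel A'" and AX: "A * X = 0\<^sub>m p s"
  shows "A' * X = 0\<^sub>m p' s"
proof (rule mat_eq_vecI)
  show "A' * X \<in> carrier_mat p' s" using A' X by auto
  show "0\<^sub>m p' s \<in> carrier_mat p' s" by auto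
  fix y :: "real vec" assume y: "y \<in> carrier_vec s"
  have "A *\<^sub>v (X *\<^sub>v y) = (A * X) *\<^sub>v y" using A X y by simp
  also have "\<dots> = 0\<^sub>v p" unfolding AX using zero_mat_vec[OF y] by simp
  finally have "X *\<^sub>v y \<in> mat_kernel A" using A X y by (auto simp: mat_kernel[OF A])
  hence "X *\<^sub>v y \<in> mat_kernel A'" using ker by auto
  hence "A' *\<^sub>v (X *\<^sub>v y) = 0\<^sub>v p'" using mat_kernel[OF A'] by auto
  thus "(A' * X) *\<^sub>v y = 0\<^sub>m p' s *\<^sub>v y" using A' X y zero_mat_vec[OF y] by simp
qed

lemma psd_zero: assumes P: "(P :: real mat) \<in> carrier_mat k k" and sym: "transpose_mat P = P"
  and psd: "\<And>x. x \<in> carrier_vec k \<Longrightarrow> 0 \<le> x \<bullet> (P *\<^sub>v x)"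
  and x: "x \<in> carrier_vec k" and z: "x \<bullet> (P *\<^sub>v x) = 0"
  shows "P *\<^sub>v x = 0\<^sub>v k"
proof (rule ccontr)
  define y where "y = P *\<^sub>v x"
  have y: "y \<in> carrier_vec k" unfolding y_def using P x by auto
  assume "P *\<^sub>v x \<noteq> 0\<^sub>v k"
  hence "y \<noteq> 0\<^sub>v k" unfolding y_def .
  hence yy: "0 < y \<bullet> y" using self_scalar_zero[OF y] self_scalar_nonneg[of y] by linarith
  define c where "c = y \<bullet> (P *\<^sub>v y)"
  have c: "0 \<le> c" unfolding c_def by (rule psd[OF y])
  define t where "t = (y \<bullet> y) / (c + 1)"
  have t: "0 < t" unfolding t_def using yy c by auto
  have xPy: "x \<bullet> (P *\<^sub>v y) = y \<bullet> y"
  proof -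
    have "x \<bullet> (P *\<^sub>v y) = (transpose_mat P *\<^sub>v x) \<bullet> y"
      using transpose_vec_mult_scalar[of P k k y x] P x y comm_scalar_prod[of x k "P *\<^sub>v y"] by simp
    thus ?thesis unfolding sym y_def .
  qed
  have yPx: "y \<bullet> (P *\<^sub>v x) = y \<bullet> y" unfolding y_def ..
  define w where "w = x - t \<cdot>\<^sub>v y"
  have w: "w \<in> carrier_vec k" unfolding w_def using x y by auto
  have Pw: "P *\<^sub>v w = P *\<^sub>v x - t \<cdot>\<^sub>v (P *\<^sub>v y)" unfolding w_def
    using mult_minus_distrib_mat_vec[OF P x, of "t \<cdot>\<^sub>v y"] mult_mat_vec[OF P y] y by simp
  have Py: "P *\<^sub>v y \<in> carrier_vec k" using P y by auto
  have Px: "P *\<^sub>v x \<in> carrier_vec k" using P x by auto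
  have "w \<bullet> (P *\<^sub>v w) = x \<bullet> (P *\<^sub>v x) - t * (x \<bullet> (P *\<^sub>v y)) - t * (y \<bullet> (P *\<^sub>v x)) + t * t * c"
  proof -
    have ty: "t \<cdot>\<^sub>v y \<in> carrier_vec k" and tPy: "t \<cdot>\<^sub>v (P *\<^sub>v y) \<in> carrier_vec k" using y Py by auto
    have e1: "(x - t \<cdot>\<^sub>v y) \<bullet> (P *\<^sub>v x - t \<cdot>\<^sub>v (P *\<^sub>v y)) = x \<bullet> (P *\<^sub>v x - t \<cdot>\<^sub>v (P *\<^sub>v y)) - (t \<cdot>\<^sub>v y) \<bullet> (P *\<^sub>v x - t \<cdot>\<^sub>v (P *\<^sub>v y))"
      by (rule minus_scalar_prod_distrib[OF x ty], insert Px tPy, auto)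
    have e2: "x \<bullet> (P *\<^sub>v x - t \<cdot>\<^sub>v (P *\<^sub>v y)) = x \<bullet> (P *\<^sub>v x) - x \<bullet> (t \<cdot>\<^sub>v (P *\<^sub>v y))"
      by (rule scalar_prod_minus_distrib[OF x Px tPy])
    have e3: "(t \<cdot>\<^sub>v y) \<bullet> (P *\<^sub>v x - t \<cdot>\<^sub>v (P *\<^sub>v y)) = (t \<cdot>\<^sub>v y) \<bullet> (P *\<^sub>v x) - (t \<cdot>\<^sub>v y) \<bullet> (t \<cdot>\<^sub>v (P *\<^sub>v y))"
      by (rule scalar_prod_minus_distrib[OF ty Px tPy])
    show ?thesis unfolding Pw unfolding w_def c_def e1 e2 e3 using x y Px Py by (simp add: algebra_simps)
  qed
  also have "\<dots> = - 2 * t * (y \<bullet> y) + t * t * c" unfolding z xPy yPx by simp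
  also have "\<dots> < 0"
  proof -
    have "t * c < 2 * (y \<bullet> y)"
    proof -
      have "t * c = (y \<bullet> y) * (c / (c + 1))" unfolding t_def by simp
      also have "\<dots> < (y \<bullet> y) * 2"
      proof (intro mult_strict_left_mono[OF _ yy])
        have "c / (c + 1) \<le> 1" using c by (simp add: divide_le_eq_1)
        thus "c / (c + 1) < 2" by linarith
      qed
      finally show ?thesis by simp
    qed
    hence "t * (t * c) < t * (2 * (y \<bullet> y))" using t by simp
    thus ?thesis by (simp add: algebra_simps)
  qed
  finally show False using psd[OF w] by simp
qed

lemma gram_sym_psd: assumes G: "(G :: real mat) \<in> carrier_mat n m"
  shows "sym_psd (transpose_mat G * G)"
  unfolding sym_psd_def
proof (intro conjI ballI)
  show "square_mat (transpose_mat G * G)" using G by auto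
  show "transpose_mat (transpose_mat G * G) = transpose_mat G * G"
    using transpose_mult[of "transpose_mat G" m n G m] G by auto
  fix x :: "real vec" assume "x \<in> carrier_vec (dim_col (transpose_mat G * G))"
  hence x: "x \<in> carrier_vec m" using G by auto
  show "0 \<le> x \<bullet> ((transpose_mat G * G) *\<^sub>v x)" unfolding quad_RtR[OF G x] by (rule self_scalar_nonneg)
qed

lemma dirA: assumes B: "B \<in> carrier_mat n m" and C: "C \<in> carrier_mat m n" and T: "T \<in> carrier_mat n n"
  and ic: "inv_cond T B C"
  shows "mat_kernel (transpose_mat C) = mat_kernel B \<and> mrank (C * B) = mrank B \<and> sym_psd (C * B)"
proof -
  obtain Ti where Ti: "Ti \<in> carrier_mat n n" and TTi: "T * Ti = 1\<^sub>m n" and TiT: "Ti * T = 1\<^sub>m n"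
    and MB: "transpose_mat T * T * B = transpose_mat C" using inv_cond_iff[OF T B C] ic by auto
  note d = carrier_matD[OF T] carrier_matD[OF Ti] carrier_matD[OF B] carrier_matD[OF C]
  define G where "G = T * B"
  have G: "G \<in> carrier_mat n m" unfolding G_def using T B by auto
  have CB: "C * B = transpose_mat G * G"
  proof -
    have "C = transpose_mat (transpose_mat T * T * B)" unfolding MB by simp
    also have "\<dots> = transpose_mat B * transpose_mat T * T" using d by (simp add: transpose_mult' assoc')
    finally show ?thesis unfolding G_def using d by (simp add: transpose_mult' assoc')
  qed
  have tkT: "tk T" by (rule left_inv_tk[OF T Ti TiT])
  have tkTT: "tk (transpose_mat T)" 
    by (rule left_inv_tk[of _ n n "transpose_mat Ti"], insert T Ti inv_transpose[OF T Ti TTi], auto)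
  have ker: "mat_kernel (transpose_mat C) = mat_kernel B"
  proof (rule Set.set_eqI)
    fix x :: "real vec"
    have CT: "transpose_mat C \<in> carrier_mat n m" using C by auto
    show "x \<in> mat_kernel (transpose_mat C) \<longleftrightarrow> x \<in> mat_kernel B"
    proof (cases "x \<in> carrier_vec m")
      case True
      have e: "transpose_mat C *\<^sub>v x = transpose_mat T *\<^sub>v (T *\<^sub>v (B *\<^sub>v x))"
        unfolding MB[symmetric] using d True by (simp add: assoc_vec')
      have "transpose_mat C *\<^sub>v x = 0\<^sub>v n \<longleftrightarrow> B *\<^sub>v x = 0\<^sub>v n"
      proof
        assume "transpose_mat C *\<^sub>v x = 0\<^sub>v n"
        hence "T *\<^sub>v (B *\<^sub>v x) = 0\<^sub>v n" using tkD[OF tkTT, of n n] e T B True by auto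
        thus "B *\<^sub>v x = 0\<^sub>v n" using tkD[OF tkT T] B True by auto
      next
        assume "B *\<^sub>v x = 0\<^sub>v n"
        thus "transpose_mat C *\<^sub>v x = 0\<^sub>v n" unfolding e using mat_vec_zero[OF T] mat_vec_zero[of "transpose_mat T" n n] T by simp
      qed
      thus ?thesis using True by (simp add: mat_kernel[OF CT] mat_kernel[OF B])
    next
      case False
      thus ?thesis by (simp add: mat_kernel[OF CT] mat_kernel[OF B])
    qed
  qed
  have psd: "sym_psd (C * B)" unfolding CB by (rule gram_sym_psd[OF G])
  obtain r V1 V2 where r: "r \<le> m" and V1: "V1 \<in> carrier_mat m r" and V2: "V2 \<in> carrier_mat m (m - r)"
    and tk: "tk (B * V1)" and V: "append_cols V1 V2 \<in> carrier_mat m m" 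
    and VV': "append_cols V1 V2 * transpose_mat (append_cols V1 V2) = 1\<^sub>m m"
    and BV: "B * append_cols V1 V2 = append_cols (B * V1) (0\<^sub>m n (m - r))" and rkd: "mrank B = r"
    using decomp_full[OF B] by blast
  have BV1: "B * V1 \<in> carrier_mat n r" using B V1 by auto
  have CBV: "C * B * append_cols V1 V2 = append_cols (C * (B * V1)) (0\<^sub>m m (m - r))"
  proof -
    have "C * B * append_cols V1 V2 = C * (B * append_cols V1 V2)" using C B V by simp
    also have "\<dots> = append_cols (C * (B * V1)) (C * 0\<^sub>m n (m - r))" unfolding BV
      by (rule mult_AC[OF C BV1], auto)
    finally show ?thesis using C by simp
  qed
  have "mrank (C * B) = mrank (C * (B * V1))"
    by (rule mrank_decomp[OF _ V _ VV' _ r CBV], insert C B V BV1, auto)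
  also have "\<dots> = r"
  proof (rule mrank_tk)
    show "C * (B * V1) \<in> carrier_mat m r" using C BV1 by auto
    show "tk (C * (B * V1))"
    proof (rule tkI)
      show "C * (B * V1) \<in> carrier_mat m r" using C BV1 by auto
      fix x assume x: "x \<in> carrier_vec r" and z: "(C * (B * V1)) *\<^sub>v x = 0\<^sub>v m"
      have V1x: "V1 *\<^sub>v x \<in> carrier_vec m" using V1 x by auto
      have "(C * B) *\<^sub>v (V1 *\<^sub>v x) = 0\<^sub>v m" using z C B V1 x by (simp add: assoc_vec')
      hence "(V1 *\<^sub>v x) \<bullet> ((transpose_mat G * G) *\<^sub>v (V1 *\<^sub>v x)) = 0" unfolding CB using V1x by simp
      hence "(G *\<^sub>v (V1 *\<^sub>v x)) \<bullet> (G *\<^sub>v (V1 *\<^sub>v x)) = 0" unfolding quad_RtR[OF G V1x] .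
      hence "G *\<^sub>v (V1 *\<^sub>v x) = 0\<^sub>v n" using self_scalar_zero[of _ n] G V1x by auto
      hence "T *\<^sub>v ((B * V1) *\<^sub>v x) = 0\<^sub>v n" unfolding G_def using T B V1 x by (simp add: assoc_vec')
      hence "(B * V1) *\<^sub>v x = 0\<^sub>v n" using tkD[OF tkT T] BV1 x by auto
      thus "x = 0\<^sub>v r" using tkD[OF tk BV1 x] by auto
    qed
  qed
  finally show ?thesis using ker psd rkd by simp
qed

lemma tk_invertible: assumes R: "(R :: real mat) \<in> carrier_mat k k" and tk: "tk R"
  shows "invertible_mat R" "invertible_mat (transpose_mat R)"
proof -
  obtain Ri where Ri: "Ri \<in> carrier_mat k k" and RRi: "R * Ri = 1\<^sub>m k" and RiR: "Ri * R = 1\<^sub>m k"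
    using tk_inv[OF R tk] by metis
  show "invertible_mat R" unfolding invertible_mat_def inverts_mat_def
    by (rule conjI, insert R, simp, rule exI[of _ Ri], insert R Ri RRi RiR, auto)
  have 1: "transpose_mat R * transpose_mat Ri = 1\<^sub>m k" using inv_transpose[OF Ri R RiR] .
  have 2: "transpose_mat Ri * transpose_mat R = 1\<^sub>m k" using inv_transpose[OF R Ri RRi] .
  show "invertible_mat (transpose_mat R)" unfolding invertible_mat_def inverts_mat_def
    by (rule conjI, insert R, simp, rule exI[of _ "transpose_mat Ri"], insert R Ri 1 2, auto)
qed

lemma dirB: assumes B: "B \<in> carrier_mat n m" and C: "C \<in> carrier_mat m n" and rk: "mrank B = r"
  and ker: "mat_kernel (transpose_mat C) = mat_kernel B" and rkCB: "mrank (C * B) = r" and psd: "sym_psd (C * B)"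
  shows "\<exists>V \<in> carrier_mat m m. real_orth V \<and> (\<exists>B1 C1 Y. split_cond n m r B C V B1 C1 Y)"
proof -
  obtain d V1 V2 where d: "d \<le> m" and V1: "V1 \<in> carrier_mat m d" and V2: "V2 \<in> carrier_mat m (m - d)"
    and tkB1: "tk (B * V1)" and BV2: "B * V2 = 0\<^sub>m n (m - d)" and V: "append_cols V1 V2 \<in> carrier_mat m m" 
    and VV: "transpose_mat (append_cols V1 V2) * append_cols V1 V2 = 1\<^sub>m m"
    and VV': "append_cols V1 V2 * transpose_mat (append_cols V1 V2) = 1\<^sub>m m"
    and BV: "B * append_cols V1 V2 = append_cols (B * V1) (0\<^sub>m n (m - d))" and rkd: "mrank B = d"
    using decomp_full[OF B] by blast
  have dr: "d = r" using rk rkd by simp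
  define V where "V = append_cols V1 V2"
  define B1 where "B1 = B * V1"
  define C1 where "C1 = transpose_mat V1 * C"
  have B1: "B1 \<in> carrier_mat n r" unfolding B1_def using B V1 dr by auto
  have C1: "C1 \<in> carrier_mat r n" unfolding C1_def using C V1 dr by auto
  have CT: "transpose_mat C \<in> carrier_mat n m" using C by auto
  have CTV2: "transpose_mat C * V2 = 0\<^sub>m n (m - d)" 
    by (rule ker_eq_zero[OF B CT V2 _ BV2], insert ker, auto)
  have C1T: "transpose_mat C1 = transpose_mat C * V1" unfolding C1_def using C V1 by (simp add: transpose_mult')
  have CV: "transpose_mat C * V = append_cols (transpose_mat C1) (0\<^sub>m n (m - r))"
    unfolding V_def C1T using mult_AC[OF CT V1 V2] CTV2 dr by simp
  have BV': "B * V = append_cols B1 (0\<^sub>m n (m - r))" unfolding V_def B1_def using BV dr by simp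
  have tkB1': "tk B1" unfolding B1_def by (rule tkB1)
  have tkC1T: "tk (transpose_mat C1)"
  proof (rule tkI)
    show "transpose_mat C1 \<in> carrier_mat n r" using C1 by auto
    fix x assume x: "x \<in> carrier_vec r" and z: "transpose_mat C1 *\<^sub>v x = 0\<^sub>v n"
    have V1x: "V1 *\<^sub>v x \<in> carrier_vec m" using V1 x dr by auto
    have "transpose_mat C *\<^sub>v (V1 *\<^sub>v x) = 0\<^sub>v n" using z unfolding C1T using C V1 x dr by (simp add: assoc_vec')
    hence "V1 *\<^sub>v x \<in> mat_kernel (transpose_mat C)" using V1x by (simp add: mat_kernel[OF CT])
    hence "V1 *\<^sub>v x \<in> mat_kernel B" using ker by simp
    hence "B *\<^sub>v (V1 *\<^sub>v x) = 0\<^sub>v n" by (simp add: mat_kernel[OF B])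
    hence "B1 *\<^sub>v x = 0\<^sub>v n" unfolding B1_def using B V1 x dr by (simp add: assoc_vec')
    thus "x = 0\<^sub>v r" using tkD[OF tkB1' B1 x] by simp
  qed
  have rB1: "mrank B1 = r" by (rule mrank_tk[OF B1 tkB1'])
  have rC1: "mrank (transpose_mat C1) = r" by (rule mrank_tk[OF _ tkC1T], insert C1, auto)
  have CB1: "C * B1 \<in> carrier_mat m r" using C B1 by auto
  have Vc: "V \<in> carrier_mat m m" unfolding V_def by (rule V)
  have CBV: "C * B * V = append_cols (C * B1) (0\<^sub>m m (m - r))"
  proof -
    have "C * B * V = C * (B * V)" using C B Vc by simp
    also have "\<dots> = append_cols (C * B1) (C * 0\<^sub>m n (m - r))" unfolding BV'
      by (rule mult_AC[OF C B1], auto)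
    finally show ?thesis using C by simp
  qed
  have "mrank (C * B) = mrank (C * B1)"
    by (rule mrank_decomp[OF _ Vc _ _ CB1 _ CBV], insert C B Vc VV' dr d, unfold V_def, auto)
  hence tkCB1: "tk (C * B1)" using full_rank_tk[OF CB1] rkCB by simp
  define P where "P = C * B"
  have P: "P \<in> carrier_mat m m" unfolding P_def using C B by auto
  have symP: "transpose_mat P = P" and psdP: "\<And>x. x \<in> carrier_vec m \<Longrightarrow> 0 \<le> x \<bullet> (P *\<^sub>v x)"
    using psd P unfolding sym_psd_def P_def by auto
  have V1r: "V1 \<in> carrier_mat m r" using V1 dr by simp
  have CB1e: "C1 * B1 = transpose_mat V1 * (P * V1)" unfolding C1_def B1_def P_def
    using C B V1r by (simp add: assoc')
  have CB1c: "C1 * B1 \<in> carrier_mat r r" using C1 B1 by auto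
  have pd: "sym_pd (C1 * B1)"
    unfolding sym_pd_def
  proof (intro conjI ballI impI)
    show "square_mat (C1 * B1)" using carrier_matD[OF B1] carrier_matD[OF C1] by simp
    show "transpose_mat (C1 * B1) = C1 * B1" unfolding CB1e using P V1r symP 
      by (simp add: transpose_mult' assoc')
    fix x :: "real vec" assume "x \<in> carrier_vec (dim_col (C1 * B1))" and x0: "x \<noteq> 0\<^sub>v (dim_col (C1 * B1))"
    hence x: "x \<in> carrier_vec r" and x0: "x \<noteq> 0\<^sub>v r" using CB1c by auto
    have V1x: "V1 *\<^sub>v x \<in> carrier_vec m" using V1r x by auto
    have q: "x \<bullet> ((C1 * B1) *\<^sub>v x) = (V1 *\<^sub>v x) \<bullet> (P *\<^sub>v (V1 *\<^sub>v x))"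
    proof -
      have "(C1 * B1) *\<^sub>v x = transpose_mat V1 *\<^sub>v (P *\<^sub>v (V1 *\<^sub>v x))" unfolding CB1e
        using P V1r x by (simp add: assoc_vec')
      hence "x \<bullet> ((C1 * B1) *\<^sub>v x) = (transpose_mat V1 *\<^sub>v (P *\<^sub>v (V1 *\<^sub>v x))) \<bullet> x"
        using comm_scalar_prod[of x r] x V1r P by simp
      also have "\<dots> = (P *\<^sub>v (V1 *\<^sub>v x)) \<bullet> (V1 *\<^sub>v x)"
        by (rule transpose_vec_mult_scalar[OF V1r x], insert P V1x, auto)
      also have "\<dots> = (V1 *\<^sub>v x) \<bullet> (P *\<^sub>v (V1 *\<^sub>v x))" using comm_scalar_prod[of "V1 *\<^sub>v x" m] P V1x by simp
      finally show ?thesis .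
    qed
    have ge: "0 \<le> x \<bullet> ((C1 * B1) *\<^sub>v x)" unfolding q by (rule psdP[OF V1x])
    have "x \<bullet> ((C1 * B1) *\<^sub>v x) \<noteq> 0"
    proof
      assume "x \<bullet> ((C1 * B1) *\<^sub>v x) = 0"
      hence "P *\<^sub>v (V1 *\<^sub>v x) = 0\<^sub>v m" using psd_zero[OF P symP psdP V1x] q by simp
      hence "(C * B1) *\<^sub>v x = 0\<^sub>v m" unfolding P_def B1_def using C B V1r x by (simp add: assoc_vec')
      hence "x = 0\<^sub>v r" using tkD[OF tkCB1 CB1 x] by simp
      thus False using x0 by simp
    qed
    thus "0 < x \<bullet> ((C1 * B1) *\<^sub>v x)" using ge by linarith
  qed
  obtain R where R: "R \<in> carrier_mat r r" and CBR: "C1 * B1 = transpose_mat R * R"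
    using cholesky[OF CB1c pd] by auto
  have tkR: "tk R" by (rule sym_pd_tk[OF CB1c pd R CBR])
  define Y where "Y = transpose_mat R"
  have Y: "Y \<in> carrier_mat r r" unfolding Y_def using R by auto
  have invY: "invertible_mat Y" unfolding Y_def by (rule tk_invertible(2)[OF R tkR])
  have YY: "C1 * B1 = Y * transpose_mat Y" unfolding Y_def CBR by simp
  have orth: "real_orth V" unfolding real_orth_def
  proof
    show "square_mat V" using carrier_matD[OF Vc] by simp
    have "dim_col V = m" using Vc by auto
    thus "transpose_mat V * V = 1\<^sub>m (dim_col V)" using VV unfolding V_def by simp
  qed
  have "split_cond n m r B C V B1 C1 Y" unfolding split_cond_def
    using B1 C1 Y BV' CV rB1 rC1 invY YY pd by auto
  thus ?thesis using Vc orth by auto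
qed

lemma invertible_obtain: assumes V: "(V :: real mat) \<in> carrier_mat m m" and inv: "invertible_mat V"
  obtains Vi where "Vi \<in> carrier_mat m m" "V * Vi = 1\<^sub>m m" "Vi * V = 1\<^sub>m m"
proof -
  from inv obtain Vi where i1: "V * Vi = 1\<^sub>m (dim_row V)" and i2: "Vi * V = 1\<^sub>m (dim_row Vi)"
    unfolding invertible_mat_def inverts_mat_def by auto
  have i1: "V * Vi = 1\<^sub>m m" using i1 V by simp
  have "dim_col Vi = m" using arg_cong[OF i1, of dim_col] by simp
  moreover have "dim_row Vi = m" using arg_cong[OF i2, of dim_col] V by simp
  ultimately have Vi: "Vi \<in> carrier_mat m m" by auto
  have i2: "Vi * V = 1\<^sub>m m" using i2 Vi by simp
  show ?thesis using that Vi i1 i2 by auto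
qed

lemma inverts_obtain: assumes Y: "(Y :: real mat) \<in> carrier_mat r r" and i1: "inverts_mat Y Yi" and i2: "inverts_mat Yi Y"
  shows "Yi \<in> carrier_mat r r" "Y * Yi = 1\<^sub>m r" "Yi * Y = 1\<^sub>m r"
proof -
  have i1: "Y * Yi = 1\<^sub>m r" using i1 Y unfolding inverts_mat_def by simp
  have i2: "Yi * Y = 1\<^sub>m (dim_row Yi)" using i2 unfolding inverts_mat_def by simp
  have "dim_col Yi = r" using arg_cong[OF i1, of dim_col] by simp
  moreover have "dim_row Yi = r" using arg_cong[OF i2, of dim_col] Y by simp
  ultimately show Yi: "Yi \<in> carrier_mat r r" by auto
  show "Y * Yi = 1\<^sub>m r" by (rule i1)
  show "Yi * Y = 1\<^sub>m r" using i2 Yi by simp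
qed

lemma E1_prop: assumes B1: "(B1 :: real mat) \<in> carrier_mat n r" 
  shows "append_cols B1 (0\<^sub>m n (m - r)) * (1\<^sub>m r @\<^sub>r 0\<^sub>m (m - r) r) = B1"
  using AC_mult_AR[OF B1 zero_carrier_mat[of n "m - r"] one_carrier_mat[of r] zero_carrier_mat[of "m - r" r]] B1
  by simp

lemma T0_inv: assumes B: "B \<in> carrier_mat n m" and C: "C \<in> carrier_mat m n"
  and V: "V \<in> carrier_mat m m" and sc: "split_cond n m r B C V B1 C1 Y"
  and Yi: "Yi \<in> carrier_mat r r" "Y * Yi = 1\<^sub>m r" "Yi * Y = 1\<^sub>m r"
  and NB: "NB \<in> carrier_mat n (n - r)" and cb: "cols_basis NB (mat_kernel (transpose_mat B))"
  and rn: "r \<le> n"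
  shows "transpose_mat NB * B = 0\<^sub>m (n - r) m"
    "transpose_mat NB * B1 = 0\<^sub>m (n - r) r"
    "\<exists>T0i \<in> carrier_mat n n. (transpose_mat NB @\<^sub>r (Yi * C1)) * T0i = 1\<^sub>m n \<and> T0i * (transpose_mat NB @\<^sub>r (Yi * C1)) = 1\<^sub>m n"
proof -
  have B1: "B1 \<in> carrier_mat n r" and C1: "C1 \<in> carrier_mat r n" and Y: "Y \<in> carrier_mat r r"
    and BV: "B * V = append_cols B1 (0\<^sub>m n (m - r))" and YY: "C1 * B1 = Y * transpose_mat Y"
    using sc unfolding split_cond_def by auto
  have BT: "transpose_mat B \<in> carrier_mat m n" using B by auto
  have BNB: "transpose_mat B * NB = 0\<^sub>m m (n - r)"
  proof (rule mat_eq_vecI)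
    show "transpose_mat B * NB \<in> carrier_mat m (n - r)" using B NB by auto
    show "0\<^sub>m m (n - r) \<in> carrier_mat m (n - r)" by auto
    fix y :: "real vec" assume y: "y \<in> carrier_vec (n - r)"
    have "NB *\<^sub>v y \<in> mat_kernel (transpose_mat B)" using cb y NB unfolding cols_basis_def by auto
    hence "transpose_mat B *\<^sub>v (NB *\<^sub>v y) = 0\<^sub>v m" using mat_kernel[OF BT] by auto
    thus "(transpose_mat B * NB) *\<^sub>v y = 0\<^sub>m m (n - r) *\<^sub>v y" using B NB y zero_mat_vec[OF y] by simp
  qed
  show NBB: "transpose_mat NB * B = 0\<^sub>m (n - r) m"
  proof -
    have "transpose_mat (transpose_mat B * NB) = transpose_mat NB * B" using B NB by (simp add: transpose_mult')
    thus ?thesis using BNB by simp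
  qed
  define E1 where "E1 = (1\<^sub>m r @\<^sub>r 0\<^sub>m (m - r) r :: real mat)"
  have rm: "r \<le> m"
  proof -
    have "dim_col (B * V) = m" using B V by simp
    hence "r + (m - r) = m" unfolding BV using B1 by simp
    thus ?thesis by simp
  qed
  have E1: "E1 \<in> carrier_mat m r" unfolding E1_def using rm carrier_append_rows[of "1\<^sub>m r" r r "0\<^sub>m (m - r) r" "m - r"] by simp
  have B1e: "B1 = B * (V * E1)" 
    using E1_prop[OF B1, of m] BV B V E1 unfolding E1_def[symmetric] by (simp add: assoc_mult_mat[symmetric, OF B V E1])
  show NBB1: "transpose_mat NB * B1 = 0\<^sub>m (n - r) r"
    unfolding B1e using NBB B NB V E1 by (simp add: assoc_mult_mat[symmetric, of "transpose_mat NB" "n - r" n B m "V * E1" r])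
  define T0 where "T0 = transpose_mat NB @\<^sub>r (Yi * C1)"
  have T0: "T0 \<in> carrier_mat n n" unfolding T0_def 
    using carrier_append_rows[of "transpose_mat NB" "n - r" n "Yi * C1" r] NB Yi C1 rn by simp
  have YiC1: "Yi * C1 \<in> carrier_mat r n" using Yi C1 by auto
  have T0T: "transpose_mat T0 = append_cols NB (transpose_mat C1 * transpose_mat Yi)"
  proof -
    have NBT: "transpose_mat NB \<in> carrier_mat (n - r) n" using NB by auto
    show ?thesis unfolding T0_def transpose_AR[OF NBT YiC1] using NB Yi C1 by (simp add: transpose_mult')
  qed
  have tkT0T: "tk (transpose_mat T0)"
  proof (rule tkI)
    show "transpose_mat T0 \<in> carrier_mat n n" using T0 by auto
    fix v assume v: "v \<in> carrier_vec n" and z: "transpose_mat T0 *\<^sub>v v = 0\<^sub>v n"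
    define u where "u = vec_first v (n - r)"
    define w where "w = vec_last v r"
    have u: "u \<in> carrier_vec (n - r)" and w: "w \<in> carrier_vec r" unfolding u_def w_def by auto
    have vuw: "v = u @\<^sub>v w" unfolding u_def w_def using split_vec[of v "n - r" r] v rn by simp
    have CY: "transpose_mat C1 * transpose_mat Yi \<in> carrier_mat n r" using C1 Yi by auto
    have e: "NB *\<^sub>v u + (transpose_mat C1 * transpose_mat Yi) *\<^sub>v w = 0\<^sub>v n"
      using z unfolding T0T vuw AC_mult_vec[OF NB CY u w] .
    have "transpose_mat B1 *\<^sub>v (NB *\<^sub>v u + (transpose_mat C1 * transpose_mat Yi) *\<^sub>v w) = 
      (transpose_mat B1 * NB) *\<^sub>v u + (transpose_mat B1 * transpose_mat C1 * transpose_mat Yi) *\<^sub>v w"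
      using B1 NB C1 Yi u w by (simp add: mult_add_distrib_mat_vec[of _ r n] assoc_vec' assoc')
    also have "transpose_mat B1 * NB = 0\<^sub>m r (n - r)"
    proof -
      have "transpose_mat (transpose_mat NB * B1) = transpose_mat B1 * NB" using B1 NB by (simp add: transpose_mult')
      thus ?thesis using NBB1 by simp
    qed
    also have "transpose_mat B1 * transpose_mat C1 * transpose_mat Yi = Y"
    proof -
      have "transpose_mat B1 * transpose_mat C1 = transpose_mat (C1 * B1)" using B1 C1 by (simp add: transpose_mult')
      also have "\<dots> = Y * transpose_mat Y" unfolding YY using Y by (simp add: transpose_mult')
      finally have "transpose_mat B1 * transpose_mat C1 * transpose_mat Yi = Y * (transpose_mat Y * transpose_mat Yi)"
        using Y Yi by (simp add: assoc')
      also have "transpose_mat Y * transpose_mat Yi = 1\<^sub>m r" using inv_transpose[OF Yi(1) Y Yi(3)] .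
      finally show ?thesis using Y by simp
    qed
    finally have "0\<^sub>m r (n - r) *\<^sub>v u + Y *\<^sub>v w = 0\<^sub>v r" unfolding e using mat_vec_zero[of "transpose_mat B1" r n] B1 by simp
    hence Yw: "Y *\<^sub>v w = 0\<^sub>v r" using zero_mat_vec[OF u, of r] Y w by simp
    have "w = (Yi * Y) *\<^sub>v w" using Yi w by simp
    also have "\<dots> = 0\<^sub>v r" using Yw Yi(1) Y w mat_vec_zero[OF Yi(1)] by (simp add: assoc_vec')
    finally have w0: "w = 0\<^sub>v r" .
    have "NB *\<^sub>v u = 0\<^sub>v n" using e unfolding w0 using mat_vec_zero[OF CY] NB u by simp
    hence u0: "u = 0\<^sub>v (n - r)" using cb u NB unfolding cols_basis_def by auto
    show "v = 0\<^sub>v n" unfolding vuw u0 w0 using zero_append_vec[of "n - r" r] rn by simp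
  qed
  obtain S where S: "S \<in> carrier_mat n n" and e1: "transpose_mat T0 * S = 1\<^sub>m n" and e2: "S * transpose_mat T0 = 1\<^sub>m n"
    using tk_inv[OF _ tkT0T] T0 by (metis transpose_carrier_mat)
  have "T0 * transpose_mat S = 1\<^sub>m n" using inv_transpose[OF S _ e2] T0 by simp
  moreover have "transpose_mat S * T0 = 1\<^sub>m n" using inv_transpose[OF _ S e1] T0 by simp
  ultimately show "\<exists>T0i \<in> carrier_mat n n. (transpose_mat NB @\<^sub>r (Yi * C1)) * T0i = 1\<^sub>m n \<and> T0i * (transpose_mat NB @\<^sub>r (Yi * C1)) = 1\<^sub>m n"
    unfolding T0_def[symmetric] using S by (intro bexI[of _ "transpose_mat S"], auto)
qed

lemma CT_formula: assumes B: "B \<in> carrier_mat n m" and C: "C \<in> carrier_mat m n"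
  and V: "V \<in> carrier_mat m m" and Vi: "Vi \<in> carrier_mat m m" "V * Vi = 1\<^sub>m m" 
  and sc: "split_cond n m r B C V B1 C1 Y"
  and Yi: "Yi \<in> carrier_mat r r" "Y * Yi = 1\<^sub>m r" "Yi * Y = 1\<^sub>m r"
  shows "transpose_mat C1 * (transpose_mat Yi * (Yi * (C1 * B))) = transpose_mat C"
proof -
  have B1: "B1 \<in> carrier_mat n r" and C1: "C1 \<in> carrier_mat r n" and Y: "Y \<in> carrier_mat r r"
    and BV: "B * V = append_cols B1 (0\<^sub>m n (m - r))" and YY: "C1 * B1 = Y * transpose_mat Y"
    and CV: "transpose_mat C * V = append_cols (transpose_mat C1) (0\<^sub>m n (m - r))"
    using sc unfolding split_cond_def by auto
  have Z1: "(0\<^sub>m n (m - r) :: real mat) \<in> carrier_mat n (m - r)" by auto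
  have "B = B * (V * Vi)" using Vi B by simp
  also have "\<dots> = append_cols B1 (0\<^sub>m n (m - r)) * Vi" unfolding BV[symmetric] using B V Vi by simp
  finally have Be: "B = append_cols B1 (0\<^sub>m n (m - r)) * Vi" .
  have "transpose_mat C = transpose_mat C * (V * Vi)" using Vi C by simp
  also have "\<dots> = append_cols (transpose_mat C1) (0\<^sub>m n (m - r)) * Vi" unfolding CV[symmetric] using C V Vi by simp
  finally have Ce: "transpose_mat C = append_cols (transpose_mat C1) (0\<^sub>m n (m - r)) * Vi" .
  have YiYi: "transpose_mat Yi * (Yi * (Y * transpose_mat Y)) = 1\<^sub>m r"
  proof -
    have "transpose_mat Yi * (Yi * (Y * transpose_mat Y)) = transpose_mat Yi * ((Yi * Y) * transpose_mat Y)"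
      using Yi(1) Y by (simp add: assoc')
    also have "\<dots> = transpose_mat Yi * transpose_mat Y" unfolding Yi(3) using Y by simp
    also have "\<dots> = 1\<^sub>m r" using inv_transpose[OF Y Yi(1) Yi(2)] .
    finally show ?thesis .
  qed
  have rm: "r \<le> m"
  proof -
    have "dim_col (B * V) = m" using B V by simp
    hence "r + (m - r) = m" unfolding BV using B1 by simp
    thus ?thesis by simp
  qed
  have "C1 * B = (C1 * append_cols B1 (0\<^sub>m n (m - r))) * Vi"
    unfolding Be using C1 B1 Vi rm by (simp add: assoc')
  also have "C1 * append_cols B1 (0\<^sub>m n (m - r)) = append_cols (C1 * B1) (C1 * 0\<^sub>m n (m - r))"
    by (rule mult_AC[OF C1 B1 Z1])
  also have "C1 * 0\<^sub>m n (m - r) = 0\<^sub>m r (m - r)" using C1 by simp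
  finally have C1B: "C1 * B = append_cols (Y * transpose_mat Y) (0\<^sub>m r (m - r)) * Vi" unfolding YY .
  have YYc: "Y * transpose_mat Y \<in> carrier_mat r r" using Y by auto
  have Z2: "(0\<^sub>m r (m - r) :: real mat) \<in> carrier_mat r (m - r)" by auto
  have YiT: "transpose_mat Yi \<in> carrier_mat r r" using Yi by auto
  have C1T: "transpose_mat C1 \<in> carrier_mat n r" using C1 by auto
  have "transpose_mat Yi * (Yi * append_cols (Y * transpose_mat Y) (0\<^sub>m r (m - r))) = 
     append_cols (transpose_mat Yi * (Yi * (Y * transpose_mat Y))) (transpose_mat Yi * (Yi * 0\<^sub>m r (m - r)))"
  proof -
    have c1: "Yi * (Y * transpose_mat Y) \<in> carrier_mat r r" using Yi Y by auto
    have c2: "Yi * 0\<^sub>m r (m - r) \<in> carrier_mat r (m - r)" using Yi by auto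
    show ?thesis using mult_AC[OF Yi(1) YYc Z2] mult_AC[OF YiT c1 c2] by simp
  qed
  also have "\<dots> = append_cols (1\<^sub>m r) (0\<^sub>m r (m - r))" unfolding YiYi using Yi by simp
  finally have e1: "transpose_mat Yi * (Yi * append_cols (Y * transpose_mat Y) (0\<^sub>m r (m - r))) = append_cols (1\<^sub>m r) (0\<^sub>m r (m - r))" .
  have e2: "transpose_mat C1 * append_cols (1\<^sub>m r) (0\<^sub>m r (m - r)) = append_cols (transpose_mat C1) (0\<^sub>m n (m - r))"
    using mult_AC[OF C1T one_carrier_mat[of r] Z2] C1T by simp
  have ACc: "append_cols (Y * transpose_mat Y) (0\<^sub>m r (m - r)) \<in> carrier_mat r (r + (m - r))" using YYc Z2 by auto
  have "transpose_mat C1 * (transpose_mat Yi * (Yi * (C1 * B))) = 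
     transpose_mat C1 * (transpose_mat Yi * (Yi * append_cols (Y * transpose_mat Y) (0\<^sub>m r (m - r)))) * Vi"
    unfolding C1B using carrier_matD[OF C1] carrier_matD[OF Yi(1)] carrier_matD[OF Vi(1)] carrier_matD[OF Y] rm
    by (simp add: assoc')
  also have "\<dots> = transpose_mat C" unfolding e1 e2 Ce ..
  finally show ?thesis .
qed

lemma build: assumes B: "B \<in> carrier_mat n m" and C: "C \<in> carrier_mat m n"
  and V: "V \<in> carrier_mat m m" and Vi: "Vi \<in> carrier_mat m m" "V * Vi = 1\<^sub>m m" 
  and sc: "split_cond n m r B C V B1 C1 Y"
  and Yi: "Yi \<in> carrier_mat r r" "Y * Yi = 1\<^sub>m r" "Yi * Y = 1\<^sub>m r"
  and NB: "NB \<in> carrier_mat n (n - r)" and cb: "cols_basis NB (mat_kernel (transpose_mat B))"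
  and rn: "r \<le> n"
  and U: "U \<in> carrier_mat n n" "transpose_mat U * U = 1\<^sub>m n"
  and Z: "Z \<in> carrier_mat (n - r) (n - r)" and Zi: "Zi \<in> carrier_mat (n - r) (n - r)" "Z * Zi = 1\<^sub>m (n - r)" "Zi * Z = 1\<^sub>m (n - r)"
  shows "U * four_block_mat Z (0\<^sub>m (n - r) r) (0\<^sub>m r (n - r)) (1\<^sub>m r) * (transpose_mat NB @\<^sub>r (Yi * C1)) \<in> carrier_mat n n \<and>
    inv_cond (U * four_block_mat Z (0\<^sub>m (n - r) r) (0\<^sub>m r (n - r)) (1\<^sub>m r) * (transpose_mat NB @\<^sub>r (Yi * C1))) B C"
proof -
  have B1: "B1 \<in> carrier_mat n r" and C1: "C1 \<in> carrier_mat r n" and Y: "Y \<in> carrier_mat r r"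
    using sc unfolding split_cond_def by auto
  have nr: "n - r + r = n" using rn by simp
  define T0 where "T0 = transpose_mat NB @\<^sub>r (Yi * C1)"
  define TZ where "TZ = four_block_mat Z (0\<^sub>m (n - r) r) (0\<^sub>m r (n - r)) (1\<^sub>m r)"
  define TZi where "TZi = four_block_mat Zi (0\<^sub>m (n - r) r) (0\<^sub>m r (n - r)) (1\<^sub>m r)"
  have NBB: "transpose_mat NB * B = 0\<^sub>m (n - r) m" using T0_inv[OF B C V sc Yi NB cb rn] by simp
  obtain T0i where T0i: "T0i \<in> carrier_mat n n" and T0T0i: "T0 * T0i = 1\<^sub>m n" and T0iT0: "T0i * T0 = 1\<^sub>m n"
    using T0_inv(3)[OF B C V sc Yi NB cb rn] unfolding T0_def[symmetric] by auto
  have NBT: "transpose_mat NB \<in> carrier_mat (n - r) n" using NB by auto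
  have YiC1: "Yi * C1 \<in> carrier_mat r n" using Yi C1 by auto
  have T0: "T0 \<in> carrier_mat n n" unfolding T0_def using carrier_append_rows[OF NBT YiC1] nr by simp
  have TZ: "TZ \<in> carrier_mat n n" unfolding TZ_def using four_block_carrier_mat[OF Z one_carrier_mat[of r]] nr by simp
  have TZi: "TZi \<in> carrier_mat n n" unfolding TZi_def using four_block_carrier_mat[OF Zi(1) one_carrier_mat[of r]] nr by simp
  have TZTZi: "TZ * TZi = 1\<^sub>m n" unfolding TZ_def TZi_def
    by (subst mult_four_block_mat[OF Z _ _ one_carrier_mat Zi(1) _ _ one_carrier_mat], insert Z Zi nr, auto)
  have TZiTZ: "TZi * TZ = 1\<^sub>m n" unfolding TZ_def TZi_def
    by (subst mult_four_block_mat[OF Zi(1) _ _ one_carrier_mat Z _ _ one_carrier_mat], insert Z Zi nr, auto)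
  have UUT: "U * transpose_mat U = 1\<^sub>m n" by (rule orth_square[OF U])
  define T where "T = U * TZ * T0"
  have T: "T \<in> carrier_mat n n" unfolding T_def using U TZ T0 by auto
  define Ti where "Ti = T0i * TZi * transpose_mat U"
  have Ti: "Ti \<in> carrier_mat n n" unfolding Ti_def using U TZi T0i by auto
  note dims = carrier_matD[OF U(1)] carrier_matD[OF TZ] carrier_matD[OF TZi] carrier_matD[OF T0] carrier_matD[OF T0i]
  have "T * Ti = U * (TZ * ((T0 * T0i) * (TZi * transpose_mat U)))" unfolding T_def Ti_def
    using dims by (simp add: assoc')
  also have "\<dots> = U * ((TZ * TZi) * transpose_mat U)" unfolding T0T0i using dims by (simp add: assoc')
  also have "\<dots> = 1\<^sub>m n" unfolding TZTZi using dims UUT by simp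
  finally have TTi: "T * Ti = 1\<^sub>m n" .
  have "Ti * T = T0i * (TZi * ((transpose_mat U * U) * (TZ * T0)))" unfolding T_def Ti_def
    using dims by (simp add: assoc')
  also have "\<dots> = T0i * ((TZi * TZ) * T0)" unfolding U(2) using dims by (simp add: assoc')
  also have "\<dots> = 1\<^sub>m n" unfolding TZiTZ using dims T0iT0 by simp
  finally have TiT: "Ti * T = 1\<^sub>m n" .
  define W where "W = Yi * (C1 * B)"
  have W: "W \<in> carrier_mat r m" unfolding W_def using Yi C1 B by auto
  have T0B: "T0 * B = 0\<^sub>m (n - r) m @\<^sub>r W" unfolding T0_def W_def
    using AR_mult[OF B NBT YiC1] NBB Yi C1 B by (simp add: assoc')
  have Z0: "(0\<^sub>m (n - r) m :: real mat) \<in> carrier_mat (n - r) m" by auto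
  have TZ0: "TZ * (0\<^sub>m (n - r) m @\<^sub>r W) = 0\<^sub>m (n - r) m @\<^sub>r W" unfolding TZ_def
    using four_block_mult_AR[OF Z _ _ one_carrier_mat Z0 W] Z W by simp
  have TZT: "transpose_mat TZ = four_block_mat (transpose_mat Z) (0\<^sub>m (n - r) r) (0\<^sub>m r (n - r)) (1\<^sub>m r)"
    unfolding TZ_def using transpose_four_block_mat[OF Z _ _ one_carrier_mat] by simp
  have ZT: "transpose_mat Z \<in> carrier_mat (n - r) (n - r)" using Z by auto
  have TZT0: "transpose_mat TZ * (0\<^sub>m (n - r) m @\<^sub>r W) = 0\<^sub>m (n - r) m @\<^sub>r W" unfolding TZT
    using four_block_mult_AR[OF ZT _ _ one_carrier_mat Z0 W] ZT W by simp
  have T0T: "transpose_mat T0 = append_cols NB (transpose_mat C1 * transpose_mat Yi)"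
    unfolding T0_def transpose_AR[OF NBT YiC1] using NB Yi C1 by (simp add: transpose_mult')
  have CY: "transpose_mat C1 * transpose_mat Yi \<in> carrier_mat n r" using C1 Yi by auto
  have T0T0: "transpose_mat T0 * (0\<^sub>m (n - r) m @\<^sub>r W) = transpose_mat C1 * transpose_mat Yi * W"
    unfolding T0T using AC_mult_AR[OF NB CY Z0 W] NB CY W by simp
  have "transpose_mat T * T * B = transpose_mat T0 * (transpose_mat TZ * ((transpose_mat U * U) * (TZ * (T0 * B))))"
    unfolding T_def using dims B by (simp add: assoc' transpose_mult')
  also have "\<dots> = transpose_mat C1 * transpose_mat Yi * W" unfolding U(2) T0B 
    using TZ0 TZT0 T0T0 TZ W nr by simp
  also have "\<dots> = transpose_mat C1 * (transpose_mat Yi * (Yi * (C1 * B)))" unfolding W_def 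
    using C1 Yi B by (simp add: assoc')
  also have "\<dots> = transpose_mat C" by (rule CT_formula[OF B C V Vi sc Yi])
  finally have "transpose_mat T * T * B = transpose_mat C" .
  hence "inv_cond T B C" using inv_cond_iff[OF T B C] Ti TTi TiT by auto
  thus ?thesis using T unfolding T_def TZ_def T0_def by simp
qed

lemma NB_exists: assumes B: "B \<in> carrier_mat n m" and V: "V \<in> carrier_mat m m" 
  and Vi: "Vi \<in> carrier_mat m m" "V * Vi = 1\<^sub>m m"
  and B1: "B1 \<in> carrier_mat n r" and tkB1: "tk B1" and BV: "B * V = append_cols B1 (0\<^sub>m n (m - r))" and rm: "r \<le> m"
  shows "\<exists>NB \<in> carrier_mat n (n - r). cols_basis NB (mat_kernel (transpose_mat B))"
proof -
  have BT: "transpose_mat B \<in> carrier_mat m n" using B by auto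
  obtain d W1 W2 where d: "d \<le> n" and W1: "W1 \<in> carrier_mat n d" and W2: "W2 \<in> carrier_mat n (n - d)"
    and o2: "transpose_mat W2 * W2 = 1\<^sub>m (n - d)" and tkBW1: "tk (transpose_mat B * W1)" 
    and BW2: "transpose_mat B * W2 = 0\<^sub>m m (n - d)"
    and sp: "\<forall>x\<in>mat_kernel (transpose_mat B). \<exists>y\<in>carrier_vec (n - d). x = W2 *\<^sub>v y"
    and WW': "append_cols W1 W2 * transpose_mat (append_cols W1 W2) = 1\<^sub>m n"
    using decomp_full[OF BT] by blast
  have W1T: "transpose_mat W1 \<in> carrier_mat d n" and W2T: "transpose_mat W2 \<in> carrier_mat (n - d) n" using W1 W2 by auto
  have WWT: "W1 * transpose_mat W1 + W2 * transpose_mat W2 = 1\<^sub>m n"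
    using WW' unfolding transpose_AC[OF W1 W2] AC_mult_AR[OF W1 W2 W1T W2T] .
  have Z1: "(0\<^sub>m n (m - r) :: real mat) \<in> carrier_mat n (m - r)" by auto
  have tkX: "tk (transpose_mat W1 * B1)"
  proof (rule tkI)
    show "transpose_mat W1 * B1 \<in> carrier_mat d r" using W1 B1 by auto
    fix x assume x: "x \<in> carrier_vec r" and Xx: "(transpose_mat W1 * B1) *\<^sub>v x = 0\<^sub>v d"
    define y where "y = B1 *\<^sub>v x"
    have y: "y \<in> carrier_vec n" unfolding y_def using B1 x by auto
    have W1y: "transpose_mat W1 *\<^sub>v y = 0\<^sub>v d" unfolding y_def using Xx W1 B1 x by (simp add: assoc_vec')
    have "y = (W1 * transpose_mat W1 + W2 * transpose_mat W2) *\<^sub>v y" unfolding WWT using y by simp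
    also have "\<dots> = W1 *\<^sub>v (transpose_mat W1 *\<^sub>v y) + W2 *\<^sub>v (transpose_mat W2 *\<^sub>v y)"
      using W1 W2 y by (simp add: add_mult_distrib_mat_vec[of _ n n] assoc_vec')
    also have "W1 *\<^sub>v (transpose_mat W1 *\<^sub>v y) = 0\<^sub>v n" unfolding W1y using mat_vec_zero[OF W1] .
    finally have yW2: "y = W2 *\<^sub>v (transpose_mat W2 *\<^sub>v y)" using W2 y by simp
    have BTy: "transpose_mat B *\<^sub>v y = 0\<^sub>v m"
    proof -
      have "transpose_mat B *\<^sub>v y = (transpose_mat B * W2) *\<^sub>v (transpose_mat W2 *\<^sub>v y)"
        using yW2 B W2 y by (metis assoc_mult_mat_vec BT mult_mat_vec_carrier transpose_carrier_mat)
      thus ?thesis unfolding BW2 using zero_mat_vec[of "transpose_mat W2 *\<^sub>v y" "n - d" m] W2 y by simp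
    qed
    define z where "z = V *\<^sub>v (x @\<^sub>v 0\<^sub>v (m - r))"
    have xz: "x @\<^sub>v 0\<^sub>v (m - r) \<in> carrier_vec m" using x rm append_carrier_vec[OF x, of "0\<^sub>v (m - r)" "m - r"] by simp
    have z: "z \<in> carrier_vec m" unfolding z_def using V xz by auto
    have "B *\<^sub>v z = (B * V) *\<^sub>v (x @\<^sub>v 0\<^sub>v (m - r))" unfolding z_def using B V xz by simp
    also have "\<dots> = B1 *\<^sub>v x + 0\<^sub>m n (m - r) *\<^sub>v 0\<^sub>v (m - r)" unfolding BV
      by (rule AC_mult_vec[OF B1 Z1 x], auto)
    also have "\<dots> = y" unfolding y_def using zero_mat_vec[of "0\<^sub>v (m - r)" "m - r" n] B1 x by simp
    finally have Bz: "B *\<^sub>v z = y" .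
    have "y \<bullet> y = y \<bullet> (B *\<^sub>v z)" unfolding Bz ..
    also have "\<dots> = (transpose_mat B *\<^sub>v y) \<bullet> z" using transpose_vec_mult_scalar[OF B z y] by simp
    also have "\<dots> = 0" unfolding BTy using z by simp
    finally have "y = 0\<^sub>v n" using self_scalar_zero[OF y] by simp
    thus "x = 0\<^sub>v r" unfolding y_def using tkD[OF tkB1 B1 x] by simp
  qed
  have rd: "r \<le> d" using tk_rows[OF _ tkX] W1 B1 by auto
  have "B = (B * V) * Vi" using B V Vi by (simp add: assoc_mult_mat[OF B V Vi(1)])
  hence Be: "B = append_cols B1 (0\<^sub>m n (m - r)) * Vi" unfolding BV .
  have B1T: "transpose_mat B1 \<in> carrier_mat r n" using B1 by auto
  have Z1T: "(0\<^sub>m (m - r) n :: real mat) \<in> carrier_mat (m - r) n" by auto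
  have BTe: "transpose_mat B = transpose_mat Vi * (transpose_mat B1 @\<^sub>r 0\<^sub>m (m - r) n)"
  proof -
    have "transpose_mat B = transpose_mat Vi * transpose_mat (append_cols B1 (0\<^sub>m n (m - r)))"
      using Be Vi B1 rm by (metis transpose_mult' AC_dims(2) carrier_matD index_zero_mat(3) le_add_diff_inverse)
    thus ?thesis unfolding transpose_AC[OF B1 Z1] by simp
  qed
  have tkX': "tk (transpose_mat B1 * W1)"
  proof (rule tkI)
    show "transpose_mat B1 * W1 \<in> carrier_mat r d" using W1 B1 by auto
    fix z assume z: "z \<in> carrier_vec d" and Xz: "(transpose_mat B1 * W1) *\<^sub>v z = 0\<^sub>v r"
    have W1z: "W1 *\<^sub>v z \<in> carrier_vec n" using W1 z by auto
    have "(transpose_mat B * W1) *\<^sub>v z = transpose_mat Vi *\<^sub>v ((transpose_mat B1 @\<^sub>r 0\<^sub>m (m - r) n) *\<^sub>v (W1 *\<^sub>v z))"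
      unfolding BTe using Vi B1 W1 z rm by (simp add: assoc_vec')
    also have "(transpose_mat B1 @\<^sub>r 0\<^sub>m (m - r) n) *\<^sub>v (W1 *\<^sub>v z) = 
       (transpose_mat B1 *\<^sub>v (W1 *\<^sub>v z)) @\<^sub>v (0\<^sub>m (m - r) n *\<^sub>v (W1 *\<^sub>v z))"
      by (rule mat_mult_append[OF B1T Z1T W1z])
    also have "transpose_mat B1 *\<^sub>v (W1 *\<^sub>v z) = 0\<^sub>v r" using Xz B1 W1 z by (simp add: assoc_vec')
    also have "0\<^sub>m (m - r) n *\<^sub>v (W1 *\<^sub>v z) = 0\<^sub>v (m - r)" by (rule zero_mat_vec[OF W1z])
    also have "0\<^sub>v r @\<^sub>v 0\<^sub>v (m - r) = (0\<^sub>v m :: real vec)" using zero_append_vec[of r "m - r"] rm by simp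
    also have "transpose_mat Vi *\<^sub>v 0\<^sub>v m = 0\<^sub>v m" using mat_vec_zero[of "transpose_mat Vi" m m] Vi by simp
    finally have e: "(transpose_mat B * W1) *\<^sub>v z = 0\<^sub>v m" .
    have "transpose_mat B * W1 \<in> carrier_mat m d" using B W1 by auto
    thus "z = 0\<^sub>v d" using tkD[OF tkBW1 _ z e] by simp
  qed
  have dr: "d \<le> r" using tk_rows[OF _ tkX'] W1 B1 by auto
  have dr: "d = r" using rd dr by simp
  have W2r: "W2 \<in> carrier_mat n (n - r)" using W2 dr by simp
  have "cols_basis W2 (mat_kernel (transpose_mat B))" unfolding cols_basis_def
  proof (intro conjI ballI impI)
    fix x assume "x \<in> carrier_vec (dim_col W2)" "W2 *\<^sub>v x = 0\<^sub>v (dim_row W2)"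
    thus "x = 0\<^sub>v (dim_col W2)" using tkD[OF left_inv_tk[OF W2 _ o2] W2] W2 by auto
  next
    show "mat_kernel (transpose_mat B) = (\<lambda>x. W2 *\<^sub>v x) ` carrier_vec (dim_col W2)"
    proof (rule Set.set_eqI, rule iffI)
      fix x assume "x \<in> mat_kernel (transpose_mat B)"
      then obtain y where "y \<in> carrier_vec (n - d)" "x = W2 *\<^sub>v y" using sp by auto
      thus "x \<in> (\<lambda>x. W2 *\<^sub>v x) ` carrier_vec (dim_col W2)" using W2 by auto
    next
      fix x assume "x \<in> (\<lambda>x. W2 *\<^sub>v x) ` carrier_vec (dim_col W2)"
      then obtain y where y: "y \<in> carrier_vec (n - d)" and x: "x = W2 *\<^sub>v y" using W2 by auto
      have "transpose_mat B *\<^sub>v x = (transpose_mat B * W2) *\<^sub>v y" unfolding x using B W2 y by simp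
      also have "\<dots> = 0\<^sub>v m" unfolding BW2 by (rule zero_mat_vec[OF y])
      finally show "x \<in> mat_kernel (transpose_mat B)" using x W2 y by (simp add: mat_kernel[OF BT])
    qed
  qed
  thus ?thesis using W2r by auto
qed

lemma fwd: assumes B: "B \<in> carrier_mat n m" and C: "C \<in> carrier_mat m n"
  and V: "V \<in> carrier_mat m m" and Vi: "Vi \<in> carrier_mat m m" "V * Vi = 1\<^sub>m m" 
  and sc: "split_cond n m r B C V B1 C1 Y"
  and Yi: "Yi \<in> carrier_mat r r" "Y * Yi = 1\<^sub>m r" "Yi * Y = 1\<^sub>m r"
  and NB: "NB \<in> carrier_mat n (n - r)" and cb: "cols_basis NB (mat_kernel (transpose_mat B))"
  and rn: "r \<le> n" and T: "T \<in> carrier_mat n n" and ic: "inv_cond T B C"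
  shows "\<exists>U Z. U \<in> carrier_mat n n \<and> real_orth U \<and> Z \<in> carrier_mat (n - r) (n - r) \<and> invertible_mat Z \<and>
     T = U * four_block_mat Z (0\<^sub>m (n - r) r) (0\<^sub>m r (n - r)) (1\<^sub>m r) * (transpose_mat NB @\<^sub>r (Yi * C1))"
proof -
  have B1: "B1 \<in> carrier_mat n r" and C1: "C1 \<in> carrier_mat r n" and Y: "Y \<in> carrier_mat r r"
    and BV: "B * V = append_cols B1 (0\<^sub>m n (m - r))" and YY: "C1 * B1 = Y * transpose_mat Y"
    and CV: "transpose_mat C * V = append_cols (transpose_mat C1) (0\<^sub>m n (m - r))"
    using sc unfolding split_cond_def by auto
  have nr: "n - r + r = n" using rn by simp
  have rm: "r \<le> m"
  proof -
    have "dim_col (B * V) = m" using B V by simp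
    hence "r + (m - r) = m" unfolding BV using B1 by simp
    thus ?thesis by simp
  qed
  obtain Ti where Ti: "Ti \<in> carrier_mat n n" and TTi: "T * Ti = 1\<^sub>m n" and TiT: "Ti * T = 1\<^sub>m n"
    and MB: "transpose_mat T * T * B = transpose_mat C" using inv_cond_iff[OF T B C] ic by auto
  define T0 where "T0 = transpose_mat NB @\<^sub>r (Yi * C1)"
  have NBB1: "transpose_mat NB * B1 = 0\<^sub>m (n - r) r" using T0_inv[OF B C V sc Yi NB cb rn] by simp
  obtain T0i where T0i: "T0i \<in> carrier_mat n n" and T0T0i: "T0 * T0i = 1\<^sub>m n" and T0iT0: "T0i * T0 = 1\<^sub>m n"
    using T0_inv(3)[OF B C V sc Yi NB cb rn] unfolding T0_def[symmetric] by auto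
  have NBT: "transpose_mat NB \<in> carrier_mat (n - r) n" using NB by auto
  have YiC1: "Yi * C1 \<in> carrier_mat r n" using Yi C1 by auto
  have T0: "T0 \<in> carrier_mat n n" unfolding T0_def using carrier_append_rows[OF NBT YiC1] nr by simp
  define E1 where "E1 = (1\<^sub>m (n - r) @\<^sub>r 0\<^sub>m r (n - r) :: real mat)"
  define E2 where "E2 = (0\<^sub>m (n - r) r @\<^sub>r 1\<^sub>m r :: real mat)"
  have E1: "E1 \<in> carrier_mat n (n - r)" unfolding E1_def using carrier_append_rows[of "1\<^sub>m (n - r)" "n - r" "n - r" "0\<^sub>m r (n - r)" r] nr by simp
  have E2: "E2 \<in> carrier_mat n r" unfolding E2_def using carrier_append_rows[of "0\<^sub>m (n - r) r" "n - r" r "1\<^sub>m r" r] nr by simp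
  have E12: "append_cols E1 E2 = 1\<^sub>m n"
    by (rule eq_matI, insert nr, auto simp: E1_def E2_def)
  have E1T: "transpose_mat E1 = append_cols (1\<^sub>m (n - r)) (0\<^sub>m (n - r) r)"
    unfolding E1_def by (subst transpose_AR, auto)
  have E2T: "transpose_mat E2 = append_cols (0\<^sub>m r (n - r)) (1\<^sub>m r)"
    unfolding E2_def by (subst transpose_AR, auto)
  have E1E1: "transpose_mat E1 * E1 = 1\<^sub>m (n - r)" unfolding E1T unfolding E1_def
    by (subst AC_mult_AR, auto)
  have E1E2: "transpose_mat E1 * E2 = 0\<^sub>m (n - r) r" unfolding E1T unfolding E2_def
    by (subst AC_mult_AR, auto)
  have E2T0: "transpose_mat E2 * T0 = Yi * C1"
  proof -
    have "transpose_mat E2 * T0 = 0\<^sub>m r (n - r) * transpose_mat NB + 1\<^sub>m r * (Yi * C1)" unfolding E2T T0_def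
      by (rule AC_mult_AR[OF _ _ NBT YiC1], auto)
    also have "0\<^sub>m r (n - r) * transpose_mat NB = 0\<^sub>m r n" using NBT by simp
    also have "1\<^sub>m r * (Yi * C1) = Yi * C1" using left_mult_one_mat[OF YiC1] .
    finally show ?thesis using left_add_zero_mat[OF YiC1] by simp
  qed
  note dims = carrier_matD[OF T] carrier_matD[OF Ti] carrier_matD[OF T0] carrier_matD[OF T0i]
    carrier_matD[OF E1] carrier_matD[OF E2] carrier_matD[OF B1] carrier_matD[OF C1] carrier_matD[OF Y]
    carrier_matD[OF Yi(1)] carrier_matD[OF NB] carrier_matD[OF B] carrier_matD[OF C] carrier_matD[OF V]
  define S where "S = T * T0i"
  define S1 where "S1 = S * E1"
  define S2 where "S2 = S * E2"
  have S: "S \<in> carrier_mat n n" unfolding S_def using T T0i by auto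
  have S1: "S1 \<in> carrier_mat n (n - r)" unfolding S1_def using S E1 by auto
  have S2: "S2 \<in> carrier_mat n r" unfolding S2_def using S E2 by auto
  have YTYiT: "transpose_mat Y * transpose_mat Yi = 1\<^sub>m r" using inv_transpose[OF Yi(1) Y Yi(3)] .
  have T0X: "T0 * (B1 * transpose_mat Yi) = E2"
  proof -
    have "T0 * (B1 * transpose_mat Yi) = (transpose_mat NB * (B1 * transpose_mat Yi)) @\<^sub>r (Yi * C1 * (B1 * transpose_mat Yi))"
      unfolding T0_def by (rule AR_mult[OF _ NBT YiC1], insert B1 Yi, auto)
    also have "transpose_mat NB * (B1 * transpose_mat Yi) = 0\<^sub>m (n - r) r"
    proof -
      have "transpose_mat NB * (B1 * transpose_mat Yi) = (transpose_mat NB * B1) * transpose_mat Yi"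
        using dims by (simp add: assoc')
      thus ?thesis unfolding NBB1 using Yi by simp
    qed
    also have "Yi * C1 * (B1 * transpose_mat Yi) = Yi * (C1 * B1) * transpose_mat Yi"
      using dims by (simp add: assoc')
    also have "\<dots> = (Yi * Y) * (transpose_mat Y * transpose_mat Yi)"
      unfolding YY using dims by (simp add: assoc')
    also have "\<dots> = 1\<^sub>m r" unfolding Yi(3) YTYiT by simp
    finally show ?thesis unfolding E2_def .
  qed
  have T0iE2: "T0i * E2 = B1 * transpose_mat Yi"
  proof -
    have "T0i * E2 = (T0i * T0) * (B1 * transpose_mat Yi)" unfolding T0X[symmetric] using dims by (simp add: assoc')
    thus ?thesis unfolding T0iT0 using dims by simp
  qed
  have S2e: "S2 = T * (B1 * transpose_mat Yi)" unfolding S2_def S_def using T0iE2 dims by (simp add: assoc')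
  define E1m where "E1m = (1\<^sub>m r @\<^sub>r 0\<^sub>m (m - r) r :: real mat)"
  have E1m: "E1m \<in> carrier_mat m r" unfolding E1m_def using rm carrier_append_rows[of "1\<^sub>m r" r r "0\<^sub>m (m - r) r" "m - r"] by simp
  have B1e: "B1 = B * (V * E1m)" 
  proof -
    have "B * (V * E1m) = (B * V) * E1m" by (rule assoc_mult_mat[symmetric, OF B V E1m])
    also have "\<dots> = B1" unfolding BV E1m_def by (rule E1_prop[OF B1])
    finally show ?thesis by simp
  qed
  have C1T: "transpose_mat C1 \<in> carrier_mat n r" using C1 by auto
  have TTB1: "transpose_mat T * (T * B1) = transpose_mat C1"
  proof -
    have "transpose_mat T * (T * B1) = (transpose_mat T * T * B) * (V * E1m)" unfolding B1e
      using dims carrier_matD[OF E1m] by (simp add: assoc')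
    also have "\<dots> = (transpose_mat C * V) * E1m" unfolding MB using dims carrier_matD[OF E1m] by (simp add: assoc')
    also have "\<dots> = transpose_mat C1" unfolding CV E1m_def by (rule E1_prop[OF C1T])
    finally show ?thesis .
  qed
  have o2: "transpose_mat S2 * S2 = 1\<^sub>m r"
  proof -
    have "transpose_mat S2 * S2 = Yi * (transpose_mat B1 * (transpose_mat T * (T * B1))) * transpose_mat Yi"
      unfolding S2e using dims by (simp add: assoc' transpose_mult')
    also have "transpose_mat B1 * (transpose_mat T * (T * B1)) = transpose_mat (C1 * B1)" unfolding TTB1
      using dims by (simp add: transpose_mult')
    also have "\<dots> = Y * transpose_mat Y" unfolding YY using dims by (simp add: transpose_mult')
    also have "Yi * (Y * transpose_mat Y) * transpose_mat Yi = (Yi * Y) * (transpose_mat Y * transpose_mat Yi)"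
      using dims by (simp add: assoc')
    finally show ?thesis unfolding Yi(3) YTYiT by simp
  qed
  have o12: "transpose_mat S1 * S2 = 0\<^sub>m (n - r) r"
  proof -
    have "transpose_mat S1 * S2 = transpose_mat E1 * (transpose_mat T0i * (transpose_mat T * (T * B1)) * transpose_mat Yi)"
      unfolding S1_def S_def S2e using dims by (simp add: assoc' transpose_mult')
    also have "transpose_mat T0i * (transpose_mat T * (T * B1)) * transpose_mat Yi = transpose_mat (Yi * C1 * T0i)"
      unfolding TTB1 using dims by (simp add: assoc' transpose_mult')
    also have "Yi * C1 * T0i = transpose_mat E2" unfolding E2T0[symmetric] using dims T0T0i 
      by (simp add: assoc')
    finally show ?thesis using E1E2 by simp
  qed
  have tkT: "tk T" by (rule left_inv_tk[OF T Ti TiT])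
  have tkT0i: "tk T0i" by (rule left_inv_tk[OF T0i T0 T0T0i])
  have tkE1: "tk E1" by (rule left_inv_tk[OF E1 _ E1E1], insert E1, auto)
  have tkS1: "tk S1" unfolding S1_def S_def 
    by (rule tk_mult[OF _ E1 tk_mult[OF T T0i tkT tkT0i] tkE1], insert T T0i, auto)
  have G: "transpose_mat S1 * S1 \<in> carrier_mat (n - r) (n - r)" using S1 by auto
  obtain R where R: "R \<in> carrier_mat (n - r) (n - r)" and GR: "transpose_mat S1 * S1 = transpose_mat R * R"
    using cholesky[OF G gram_sym_pd[OF S1 tkS1]] by auto
  have tkR: "tk R" by (rule sym_pd_tk[OF G gram_sym_pd[OF S1 tkS1] R GR])
  obtain Ri where Ri: "Ri \<in> carrier_mat (n - r) (n - r)" and RRi: "R * Ri = 1\<^sub>m (n - r)" and RiR: "Ri * R = 1\<^sub>m (n - r)"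
    using tk_inv[OF R tkR] by metis
  note dims2 = carrier_matD[OF R] carrier_matD[OF Ri] carrier_matD[OF S1] carrier_matD[OF S2]
  define U where "U = append_cols (S1 * Ri) S2"
  have S1Ri: "S1 * Ri \<in> carrier_mat n (n - r)" using S1 Ri by auto
  have U: "U \<in> carrier_mat n n" unfolding U_def using AC_carrier[OF S1Ri S2] nr by simp
  have o1: "transpose_mat (S1 * Ri) * (S1 * Ri) = 1\<^sub>m (n - r)"
  proof -
    have "transpose_mat (S1 * Ri) * (S1 * Ri) = transpose_mat Ri * (transpose_mat S1 * S1) * Ri"
      using dims2 by (simp add: assoc' transpose_mult')
    also have "\<dots> = transpose_mat (R * Ri) * (R * Ri)" unfolding GR using dims2 by (simp add: assoc' transpose_mult')
    finally show ?thesis unfolding RRi by simp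
  qed
  have o12': "transpose_mat (S1 * Ri) * S2 = 0\<^sub>m (n - r) r"
  proof -
    have "transpose_mat (S1 * Ri) * S2 = transpose_mat Ri * (transpose_mat S1 * S2)" using dims2 by (simp add: assoc' transpose_mult')
    thus ?thesis unfolding o12 using Ri by simp
  qed
  have UU: "transpose_mat U * U = 1\<^sub>m n" unfolding U_def using orth_AC[OF S1Ri S2 o1 o2 o12'] nr by simp
  have orth: "real_orth U" unfolding real_orth_def
  proof
    show "square_mat U" using carrier_matD[OF U] by simp
    show "transpose_mat U * U = 1\<^sub>m (dim_col U)" using UU U by simp
  qed
  have UTZ: "U * four_block_mat R (0\<^sub>m (n - r) r) (0\<^sub>m r (n - r)) (1\<^sub>m r) = append_cols S1 S2"
  proof -
    have "U * four_block_mat R (0\<^sub>m (n - r) r) (0\<^sub>m r (n - r)) (1\<^sub>m r) = 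
       append_cols (S1 * Ri * R + S2 * 0\<^sub>m r (n - r)) (S1 * Ri * 0\<^sub>m (n - r) r + S2 * 1\<^sub>m r)"
      unfolding U_def by (rule AC_mult_four_block[OF R _ _ _ S1Ri S2], auto)
    also have "S1 * Ri * R = S1" using dims2 RiR by (simp add: assoc')
    finally show ?thesis using S1 S2 Ri by simp
  qed
  have "append_cols S1 S2 = S" unfolding S1_def S2_def using mult_AC[OF S E1 E2] E12 S nr by simp
  hence "U * four_block_mat R (0\<^sub>m (n - r) r) (0\<^sub>m r (n - r)) (1\<^sub>m r) * T0 = T"
    unfolding UTZ S_def using dims T0iT0 by (simp add: assoc')
  moreover have "invertible_mat R" by (rule tk_invertible(1)[OF R tkR])
  ultimately show ?thesis unfolding T0_def using U orth R by blast
qed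

lemma split_rn: assumes sc: "split_cond n m r B C V B1 C1 Y" shows "r \<le> n" "tk B1"
proof -
  have B1: "B1 \<in> carrier_mat n r" and rk: "mrank B1 = r" using sc unfolding split_cond_def by auto
  show "tk B1" by (rule full_rank_tk[OF B1 rk])
  thus "r \<le> n" using tk_rows[OF B1] by simp
qed

lemma split_rm: assumes B: "B \<in> carrier_mat n m" and V: "V \<in> carrier_mat m m" 
  and sc: "split_cond n m r B C V B1 C1 Y" shows "r \<le> m"
proof -
  have B1: "B1 \<in> carrier_mat n r" and BV: "B * V = append_cols B1 (0\<^sub>m n (m - r))" using sc unfolding split_cond_def by auto
  have "dim_col (B * V) = m" using B V by simp
  hence "r + (m - r) = m" unfolding BV using B1 by simp
  thus ?thesis by simp
qed

lemma dirD: assumes B: "B \<in> carrier_mat n m" and C: "C \<in> carrier_mat m n"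
  and V: "V \<in> carrier_mat m m" and inv: "invertible_mat V" and sc: "split_cond n m r B C V B1 C1 Y"
  shows "\<exists>T \<in> carrier_mat n n. inv_cond T B C"
proof -
  obtain Vi where Vi: "Vi \<in> carrier_mat m m" "V * Vi = 1\<^sub>m m" "Vi * V = 1\<^sub>m m" using invertible_obtain[OF V inv] by blast
  have Y: "Y \<in> carrier_mat r r" and invY: "invertible_mat Y" and B1: "B1 \<in> carrier_mat n r"
    and BV: "B * V = append_cols B1 (0\<^sub>m n (m - r))" using sc unfolding split_cond_def by auto
  obtain Yi where Yi: "Yi \<in> carrier_mat r r" "Y * Yi = 1\<^sub>m r" "Yi * Y = 1\<^sub>m r" using invertible_obtain[OF Y invY] by blast
  have rn: "r \<le> n" and tkB1: "tk B1" using split_rn[OF sc] by auto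
  have rm: "r \<le> m" by (rule split_rm[OF B V sc])
  obtain NB where NB: "NB \<in> carrier_mat n (n - r)" and cb: "cols_basis NB (mat_kernel (transpose_mat B))"
    using NB_exists[OF B V Vi(1,2) B1 tkB1 BV rm] by blast
  have "1\<^sub>m n * four_block_mat (1\<^sub>m (n - r)) (0\<^sub>m (n - r) r) (0\<^sub>m r (n - r)) (1\<^sub>m r) * (transpose_mat NB @\<^sub>r (Yi * C1)) \<in> carrier_mat n n \<and>
    inv_cond (1\<^sub>m n * four_block_mat (1\<^sub>m (n - r)) (0\<^sub>m (n - r) r) (0\<^sub>m r (n - r)) (1\<^sub>m r) * (transpose_mat NB @\<^sub>r (Yi * C1))) B C"
  proof -
    have U1: "(1\<^sub>m n :: real mat) \<in> carrier_mat n n" "transpose_mat (1\<^sub>m n) * 1\<^sub>m n = (1\<^sub>m n :: real mat)" by auto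
    have Z1: "(1\<^sub>m (n - r) :: real mat) \<in> carrier_mat (n - r) (n - r)" "1\<^sub>m (n - r) * 1\<^sub>m (n - r) = (1\<^sub>m (n - r) :: real mat)" by auto
    show ?thesis by (rule build[OF B C V Vi(1,2) sc Yi NB cb rn U1 Z1(1) Z1(1) Z1(2) Z1(2)])
  qed
  thus ?thesis by blast
qed

lemma orth_invertible: assumes V: "(V :: real mat) \<in> carrier_mat m m" and o: "real_orth V"
  shows "invertible_mat V"
proof -
  have VV: "transpose_mat V * V = 1\<^sub>m m" using o V unfolding real_orth_def by auto
  have VV': "V * transpose_mat V = 1\<^sub>m m" by (rule orth_square[OF V VV])
  show ?thesis unfolding invertible_mat_def inverts_mat_def
    by (rule conjI, insert V, simp, rule exI[of _ "transpose_mat V"], insert V VV VV', auto)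
qed

theorem lemma3p2:
  fixes B C :: "real mat" and n m r :: nat
  assumes B: "B \<in> carrier_mat n m"
    and C: "C \<in> carrier_mat m n"
    and rk: "mrank B = r"
  shows
   "((\<exists>T \<in> carrier_mat n n. inv_cond T B C) \<longleftrightarrow>
       mat_kernel (transpose_mat C) = mat_kernel B \<and> mrank (C * B) = r \<and> sym_psd (C * B))
  \<and> ((\<exists>T \<in> carrier_mat n n. inv_cond T B C) \<longleftrightarrow>
       (\<exists>V \<in> carrier_mat m m. invertible_mat V \<and> (\<exists>B1 C1 Y. split_cond n m r B C V B1 C1 Y)))
  \<and> ((\<exists>T \<in> carrier_mat n n. inv_cond T B C) \<longleftrightarrow>
       (\<exists>V \<in> carrier_mat m m. real_orth V \<and> (\<exists>B1 C1 Y. split_cond n m r B C V B1 C1 Y)))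
  \<and> (\<forall>V B1 C1 Y Yi NB.
       V \<in> carrier_mat m m \<longrightarrow> invertible_mat V \<longrightarrow> split_cond n m r B C V B1 C1 Y \<longrightarrow>
       inverts_mat Y Yi \<longrightarrow> inverts_mat Yi Y \<longrightarrow>
       NB \<in> carrier_mat n (n - r) \<longrightarrow> cols_basis NB (mat_kernel (transpose_mat B)) \<longrightarrow>
       (\<forall>T \<in> carrier_mat n n. inv_cond T B C \<longleftrightarrow>
          (\<exists>U Z. U \<in> carrier_mat n n \<and> real_orth U \<and>
                 Z \<in> carrier_mat (n - r) (n - r) \<and> invertible_mat Z \<and>
                 T = U * four_block_mat Z (0\<^sub>m (n - r) r) (0\<^sub>m r (n - r)) (1\<^sub>m r)
                       * (transpose_mat NB @\<^sub>r (Yi * C1)))))"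
proof -
  let ?P0 = "\<exists>T \<in> carrier_mat n n. inv_cond T B C"
  let ?Pa = "mat_kernel (transpose_mat C) = mat_kernel B \<and> mrank (C * B) = r \<and> sym_psd (C * B)"
  let ?Pinv = "\<exists>V \<in> carrier_mat m m. invertible_mat V \<and> (\<exists>B1 C1 Y. split_cond n m r B C V B1 C1 Y)"
  let ?Port = "\<exists>V \<in> carrier_mat m m. real_orth V \<and> (\<exists>B1 C1 Y. split_cond n m r B C V B1 C1 Y)"
  have 1: "?P0 \<Longrightarrow> ?Pa" using dirA[OF B C] rk by blast
  have 2: "?Pa \<Longrightarrow> ?Port" using dirB[OF B C rk] by blast
  have 3: "?Port \<Longrightarrow> ?Pinv" using orth_invertible by blast
  have 4: "?Pinv \<Longrightarrow> ?P0" using dirD[OF B C] by blast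
  have b: "\<forall>V B1 C1 Y Yi NB.
       V \<in> carrier_mat m m \<longrightarrow> invertible_mat V \<longrightarrow> split_cond n m r B C V B1 C1 Y \<longrightarrow>
       inverts_mat Y Yi \<longrightarrow> inverts_mat Yi Y \<longrightarrow>
       NB \<in> carrier_mat n (n - r) \<longrightarrow> cols_basis NB (mat_kernel (transpose_mat B)) \<longrightarrow>
       (\<forall>T \<in> carrier_mat n n. inv_cond T B C \<longleftrightarrow>
          (\<exists>U Z. U \<in> carrier_mat n n \<and> real_orth U \<and>
                 Z \<in> carrier_mat (n - r) (n - r) \<and> invertible_mat Z \<and>
                 T = U * four_block_mat Z (0\<^sub>m (n - r) r) (0\<^sub>m r (n - r)) (1\<^sub>m r)
                       * (transpose_mat NB @\<^sub>r (Yi * C1))))"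
  proof (intro allI impI ballI)
    fix V B1 C1 Y Yi NB and T :: "real mat"
    assume V: "V \<in> carrier_mat m m" and inv: "invertible_mat V" and sc: "split_cond n m r B C V B1 C1 Y"
      and i1: "inverts_mat Y Yi" and i2: "inverts_mat Yi Y" and NB: "NB \<in> carrier_mat n (n - r)"
      and cb: "cols_basis NB (mat_kernel (transpose_mat B))" and T: "T \<in> carrier_mat n n"
    obtain Vi where Vi: "Vi \<in> carrier_mat m m" "V * Vi = 1\<^sub>m m" "Vi * V = 1\<^sub>m m" using invertible_obtain[OF V inv] by blast
    have Y: "Y \<in> carrier_mat r r" using sc unfolding split_cond_def by auto
    note Yi = inverts_obtain[OF Y i1 i2]
    have rn: "r \<le> n" using split_rn[OF sc] by auto
    show "inv_cond T B C \<longleftrightarrow>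
          (\<exists>U Z. U \<in> carrier_mat n n \<and> real_orth U \<and>
                 Z \<in> carrier_mat (n - r) (n - r) \<and> invertible_mat Z \<and>
                 T = U * four_block_mat Z (0\<^sub>m (n - r) r) (0\<^sub>m r (n - r)) (1\<^sub>m r)
                       * (transpose_mat NB @\<^sub>r (Yi * C1)))"
    proof
      assume "inv_cond T B C"
      from fwd[OF B C V Vi(1,2) sc Yi NB cb rn T this]
      show "\<exists>U Z. U \<in> carrier_mat n n \<and> real_orth U \<and>
                 Z \<in> carrier_mat (n - r) (n - r) \<and> invertible_mat Z \<and>
                 T = U * four_block_mat Z (0\<^sub>m (n - r) r) (0\<^sub>m r (n - r)) (1\<^sub>m r)
                       * (transpose_mat NB @\<^sub>r (Yi * C1))" .
    next
      assume "\<exists>U Z. U \<in> carrier_mat n n \<and> real_orth U \<and>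
                 Z \<in> carrier_mat (n - r) (n - r) \<and> invertible_mat Z \<and>
                 T = U * four_block_mat Z (0\<^sub>m (n - r) r) (0\<^sub>m r (n - r)) (1\<^sub>m r)
                       * (transpose_mat NB @\<^sub>r (Yi * C1))"
      then obtain U Z where U: "U \<in> carrier_mat n n" and oU: "real_orth U" and Z: "Z \<in> carrier_mat (n - r) (n - r)"
        and invZ: "invertible_mat Z" and Te: "T = U * four_block_mat Z (0\<^sub>m (n - r) r) (0\<^sub>m r (n - r)) (1\<^sub>m r)
                       * (transpose_mat NB @\<^sub>r (Yi * C1))" by blast
      obtain Zi where Zi: "Zi \<in> carrier_mat (n - r) (n - r)" "Z * Zi = 1\<^sub>m (n - r)" "Zi * Z = 1\<^sub>m (n - r)"
        using invertible_obtain[OF Z invZ] by blast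
      have UU: "transpose_mat U * U = 1\<^sub>m n" using oU U unfolding real_orth_def by auto
      show "inv_cond T B C" unfolding Te using build[OF B C V Vi(1,2) sc Yi NB cb rn U UU Z Zi] by blast
    qed
  qed
  show ?thesis using 1 2 3 4 b by blast
qed

end
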